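(* Let $(\mathcal C,\Delta,\delta)$ be a coalgebra and let $L$ be a sesquilinear form on $\mathcal C$. Then the following are equivalent: (i) $L$ is conditionally positive and hermitian; (ii) $\exp_\star(tL)$ is positive for all $t\in\mathbb R_+$.
   Context: A coalgebra $(\mathcal C,\Delta,\delta)$ is a complex vector space with linear $\Delta:\mathcal C\to\mathcal C\otimes\mathcal C$ and linear $\delta:\mathcal C\to\mathbb C$ satisfying coassociativity $(\Delta\otimes\mathrm{id})\Delta=(\mathrm{id}\otimes\Delta)\Delta$ and the counit property $(\delta\otimes\mathrm{id})\Delta=\mathrm{id}=(\mathrm{id}\otimes\delta)\Delta$. Write $\Delta c=\sum c_{(1)}\otimes c_{(2)}$. Sesquilinear forms $K$ on $\mathcal C$ are antilinear in the first and linear in the second variable; they are identified with linear functionals on the coalgebra $\overline{\mathcal C}\otimes\mathcal C$ (where $\overline{\mathcal C}$ is the complex conjugate coalgebra and the tensor product of coalgebras carries the comultiplication $(\mathrm{id}\otimes\tau\otimes\mathrm{id})(\overline\Delta\otimes\Delta)$, $\tau$ the flip, and counit $\overline\delta\otimes\delta$). The convolution of sesquilinear forms is $(K\star L)(c,d)=\sum K(c_{(1)},d_{(1)})\,L(c_{(2)},d_{(2)})$, with unit $(c,d)\mapsto\overline{\delta(c)}\delta(d)$, and $\exp_\star L=\sum_{k\ge0}L^{\star k}/k!$, the series converging pointwise. $K$ is positive if $K(c,c)\ge0$ for all $c\in\mathcal C$, hermitian if $K(c,d)=\overline{K(d,c)}$ for all $c,d$, and conditionally positive if $K(c,c)\ge0$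 for all $c\in\mathcal C$ with $\delta(c)=0$. *)

theory Defs
  imports "HOL-Analysis.Analysis" "HOL-Library.Complex_Order"
begin

text \<open>An element of C (x) C is represented by a finite list of pairs (x,y),
  standing for the sum of the x (x) y.  Since scalar multilinear forms
  separate points of algebraic tensor products, linearity and coassociativity
  of the comultiplication are expressed by evaluation against all scalar
  bilinear resp. trilinear forms.\<close>

definition lin_form :: "(complex \<Rightarrow> 'c::ab_group_add \<Rightarrow> 'c) \<Rightarrow> ('c \<Rightarrow> complex) \<Rightarrow> bool" where
  "lin_form smult_c f \<longleftrightarrow> Vector_Spaces.linear smult_c (*) f"

definition bilin_form :: "(complex \<Rightarrow> 'c::ab_group_add \<Rightarrow> 'c) \<Rightarrow> ('c \<Rightarrow> 'c \<Rightarrow> complex) \<Rightarrow> bool" where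
  "bilin_form smult_c B \<longleftrightarrow> (\<forall>x. lin_form smult_c (B x)) \<and> (\<forall>y. lin_form smult_c (\<lambda>x. B x y))"

definition trilin_form :: "(complex \<Rightarrow> 'c::ab_group_add \<Rightarrow> 'c) \<Rightarrow> ('c \<Rightarrow> 'c \<Rightarrow> 'c \<Rightarrow> complex) \<Rightarrow> bool" where
  "trilin_form smult_c T \<longleftrightarrow> (\<forall>x y. lin_form smult_c (T x y)) \<and> (\<forall>x z. lin_form smult_c (\<lambda>y. T x y z))
      \<and> (\<forall>y z. lin_form smult_c (\<lambda>x. T x y z))"

definition tsum :: "('c \<times> 'c) list \<Rightarrow> ('c \<Rightarrow> 'c \<Rightarrow> 'v::comm_monoid_add) \<Rightarrow> 'v" where
  "tsum xs f = sum_list (map (\<lambda>(x, y). f x y) xs)"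

definition coalgebra ::
  "(complex \<Rightarrow> 'c::ab_group_add \<Rightarrow> 'c) \<Rightarrow> ('c \<Rightarrow> ('c \<times> 'c) list) \<Rightarrow> ('c \<Rightarrow> complex) \<Rightarrow> bool" where
  "coalgebra smult_c \<Delta> \<delta> \<longleftrightarrow>
     vector_space smult_c
   \<and> (\<forall>B. bilin_form smult_c B \<longrightarrow> lin_form smult_c (\<lambda>c. tsum (\<Delta> c) B))
   \<and> lin_form smult_c \<delta>
   \<and> (\<forall>T. trilin_form smult_c T \<longrightarrow>
        (\<forall>c. tsum (\<Delta> c) (\<lambda>x y. tsum (\<Delta> x) (\<lambda>u v. T u v y))
           = tsum (\<Delta> c) (\<lambda>x y. tsum (\<Delta> y) (\<lambda>u v. T x u v))))
   \<and> (\<forall>c. tsum (\<Delta> c) (\<lambda>x y. smult_c (\<delta> x) y) = c)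
   \<and> (\<forall>c. tsum (\<Delta> c) (\<lambda>x y. smult_c (\<delta> y) x) = c)"

definition sesquilinear :: "(complex \<Rightarrow> 'c::ab_group_add \<Rightarrow> 'c) \<Rightarrow> ('c \<Rightarrow> 'c \<Rightarrow> complex) \<Rightarrow> bool" where
  "sesquilinear smult_c K \<longleftrightarrow> (\<forall>c. lin_form smult_c (K c)) \<and> (\<forall>d. lin_form smult_c (\<lambda>c. cnj (K c d)))"

definition conv :: "('c \<Rightarrow> ('c \<times> 'c) list) \<Rightarrow> ('c \<Rightarrow> 'c \<Rightarrow> complex) \<Rightarrow> ('c \<Rightarrow> 'c \<Rightarrow> complex) \<Rightarrow> ('c \<Rightarrow> 'c \<Rightarrow> complex)" where
  "conv \<Delta> K L c d = tsum (\<Delta> c) (\<lambda>c1 c2. tsum (\<Delta> d) (\<lambda>d1 d2. K c1 d1 * L c2 d2))"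

definition conv_unit :: "('c \<Rightarrow> complex) \<Rightarrow> ('c \<Rightarrow> 'c \<Rightarrow> complex)" where
  "conv_unit \<delta> c d = cnj (\<delta> c) * \<delta> d"

primrec conv_pow :: "('c \<Rightarrow> ('c \<times> 'c) list) \<Rightarrow> ('c \<Rightarrow> complex) \<Rightarrow> ('c \<Rightarrow> 'c \<Rightarrow> complex) \<Rightarrow> nat \<Rightarrow> ('c \<Rightarrow> 'c \<Rightarrow> complex)" where
  "conv_pow \<Delta> \<delta> L 0 = conv_unit \<delta>"
| "conv_pow \<Delta> \<delta> L (Suc k) = conv \<Delta> L (conv_pow \<Delta> \<delta> L k)"

definition exp_star :: "('c \<Rightarrow> ('c \<times> 'c) list) \<Rightarrow> ('c \<Rightarrow> complex) \<Rightarrow> ('c \<Rightarrow> 'c \<Rightarrow> complex) \<Rightarrow> ('c \<Rightarrow> 'c \<Rightarrow> complex)" where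
  "exp_star \<Delta> \<delta> L c d = (\<Sum>k. conv_pow \<Delta> \<delta> L k c d / of_nat (fact k))"

definition positive_form :: "('c \<Rightarrow> 'c \<Rightarrow> complex) \<Rightarrow> bool" where
  "positive_form K \<longleftrightarrow> (\<forall>c. 0 \<le> K c c)"

definition hermitian_form :: "('c \<Rightarrow> 'c \<Rightarrow> complex) \<Rightarrow> bool" where
  "hermitian_form K \<longleftrightarrow> (\<forall>c d. K c d = cnj (K d c))"

definition cond_positive :: "('c \<Rightarrow> complex) \<Rightarrow> ('c \<Rightarrow> 'c \<Rightarrow> complex) \<Rightarrow> bool" where
  "cond_positive \<delta> K \<longleftrightarrow> (\<forall>c. \<delta> c = 0 \<longrightarrow> 0 \<le> K c c)"

end

theory Submission
  imports Defs
begin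

lemma vs_complex: "vector_space ((*) :: complex \<Rightarrow> complex \<Rightarrow> complex)"
  by (simp add: vector_space_def algebra_simps)

lemma lin_formI:
  assumes "vector_space sm" "\<And>x y. f (x + y) = f x + f y" "\<And>a x. f (sm a x) = a * f x"
  shows "lin_form sm f"
  using assms vs_complex unfolding lin_form_def Vector_Spaces.linear_iff by auto

lemma lin_add: "lin_form sm f \<Longrightarrow> f (x + y) = f x + f y"
  unfolding lin_form_def Vector_Spaces.linear_iff by auto

lemma lin_scale: "lin_form sm f \<Longrightarrow> f (sm a x) = a * f x"
  unfolding lin_form_def Vector_Spaces.linear_iff by auto

lemma lin_vs: "lin_form sm f \<Longrightarrow> vector_space sm"
  unfolding lin_form_def Vector_Spaces.linear_iff by auto

lemma lin_zero: "lin_form sm f \<Longrightarrow> f 0 = 0"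
  using lin_add[of sm f 0 0] by simp

lemma lin_sum: "lin_form sm f \<Longrightarrow> f (\<Sum>i\<in>S. g i) = (\<Sum>i\<in>S. f (g i))"
  by (induction S rule: infinite_finite_induct) (auto simp: lin_zero lin_add)

lemma lin_neg: "lin_form sm f \<Longrightarrow> f (- x) = - f x"
  using lin_add[of sm f x "-x"] lin_zero[of sm f] by (simp add: eq_neg_iff_add_eq_0 add.commute)

lemma lin_diff: "lin_form sm f \<Longrightarrow> f (x - y) = f x - f y"
  using lin_add[of sm f x "-y"] lin_neg[of sm f y] by simp

lemma lin_comb:
  assumes "lin_form sm f"
  shows "f (\<Sum>i\<in>S. sm (a i) (g i)) = (\<Sum>i\<in>S. a i * f (g i))"
  using assms by (simp add: lin_sum lin_scale)

lemma lin_const_mult: "lin_form sm f \<Longrightarrow> lin_form sm (\<lambda>x. a * f x)"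
  using lin_vs[of sm f] by (intro lin_formI) (auto simp: lin_add lin_scale algebra_simps)

lemma lin_plus: "lin_form sm f \<Longrightarrow> lin_form sm g \<Longrightarrow> lin_form sm (\<lambda>x. f x + g x)"
  using lin_vs[of sm f] by (intro lin_formI) (auto simp: lin_add lin_scale algebra_simps)

lemma lin_sumf: "vector_space sm \<Longrightarrow> (\<And>i. i \<in> S \<Longrightarrow> lin_form sm (f i)) \<Longrightarrow> lin_form sm (\<lambda>x. \<Sum>i\<in>S. f i x)"
  by (intro lin_formI) (auto simp: lin_add[of sm "f _"] lin_scale[of sm "f _"] sum.distrib[symmetric] sum_distrib_left intro!: sum.cong)

lemma lin_cnj_cnj: "lin_form sm (\<lambda>x. cnj (f x)) \<Longrightarrow> f (sm a x) = cnj a * f x"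
  using lin_scale[of sm "\<lambda>x. cnj (f x)" a x] by (metis complex_cnj_cnj complex_cnj_mult)

lemma lin_cnj_add: "lin_form sm (\<lambda>x. cnj (f x)) \<Longrightarrow> f (x + y) = f x + f y"
  using lin_add[of sm "\<lambda>x. cnj (f x)" x y] by (metis complex_cnj_cnj complex_cnj_add)

lemma lin_cnj_sum: "lin_form sm (\<lambda>x. cnj (f x)) \<Longrightarrow> f (\<Sum>i\<in>S. g i) = (\<Sum>i\<in>S. f (g i))"
  using lin_sum[of sm "\<lambda>x. cnj (f x)" g S] by (metis cnj_sum complex_cnj_cnj)

lemma lin_cnj_comb:
  assumes "lin_form sm (\<lambda>x. cnj (f x))"
  shows "f (\<Sum>i\<in>S. sm (a i) (g i)) = (\<Sum>i\<in>S. cnj (a i) * f (g i))"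
  using assms by (simp add: lin_cnj_sum lin_cnj_cnj)

lemma ses_lin2: "sesquilinear sm K \<Longrightarrow> lin_form sm (K c)"
  unfolding sesquilinear_def by auto
lemma ses_lin1: "sesquilinear sm K \<Longrightarrow> lin_form sm (\<lambda>c. cnj (K c d))"
  unfolding sesquilinear_def by auto

lemma ses_comb2: "sesquilinear sm K \<Longrightarrow> K c (\<Sum>i\<in>S. sm (a i) (g i)) = (\<Sum>i\<in>S. a i * K c (g i))"
  by (rule lin_comb[OF ses_lin2])
lemma ses_comb1: "sesquilinear sm K \<Longrightarrow> K (\<Sum>i\<in>S. sm (a i) (g i)) d = (\<Sum>i\<in>S. cnj (a i) * K (g i) d)"
  by (rule lin_cnj_comb[OF ses_lin1])

lemma ses_add2: "sesquilinear sm K \<Longrightarrow> K c (x + y) = K c x + K c y"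
  by (rule lin_add[OF ses_lin2])
lemma ses_add1: "sesquilinear sm K \<Longrightarrow> K (x + y) d = K x d + K y d"
  by (rule lin_cnj_add[OF ses_lin1])
lemma ses_scale2: "sesquilinear sm K \<Longrightarrow> K c (sm a x) = a * K c x"
  by (rule lin_scale[OF ses_lin2])
lemma ses_scale1: "sesquilinear sm K \<Longrightarrow> K (sm a x) d = cnj a * K x d"
  by (rule lin_cnj_cnj[OF ses_lin1])
lemma ses_vs: "sesquilinear sm K \<Longrightarrow> vector_space sm"
  using ses_lin2 lin_vs by blast

lemma sesI:
  assumes "\<And>c. lin_form sm (K c)" "\<And>d. lin_form sm (\<lambda>c. cnj (K c d))"
  shows "sesquilinear sm K"
  using assms unfolding sesquilinear_def by auto

lemma bilinI:
  assumes "\<And>x. lin_form sm (B x)" "\<And>y. lin_form sm (\<lambda>x. B x y)"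
  shows "bilin_form sm B"
  using assms unfolding bilin_form_def by auto

lemma trilinI:
  assumes "\<And>x y. lin_form sm (T x y)" "\<And>x z. lin_form sm (\<lambda>y. T x y z)" "\<And>y z. lin_form sm (\<lambda>x. T x y z)"
  shows "trilin_form sm T"
  using assms unfolding trilin_form_def by auto

lemma bilin_lin1: "bilin_form sm B \<Longrightarrow> lin_form sm (\<lambda>x. B x y)"
  unfolding bilin_form_def by auto
lemma bilin_lin2: "bilin_form sm B \<Longrightarrow> lin_form sm (B x)"
  unfolding bilin_form_def by auto

definition nn :: "('c \<Rightarrow> ('c \<times> 'c) list) \<Rightarrow> 'c \<Rightarrow> nat" where "nn D c = length (D c)"
definition XX :: "('c \<Rightarrow> ('c \<times> 'c) list) \<Rightarrow> 'c \<Rightarrow> nat \<Rightarrow> 'c" where "XX D c i = fst (D c ! i)"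
definition YY :: "('c \<Rightarrow> ('c \<times> 'c) list) \<Rightarrow> 'c \<Rightarrow> nat \<Rightarrow> 'c" where "YY D c i = snd (D c ! i)"

lemma tsum_idx: "tsum (D c) f = (\<Sum>i<nn D c. f (XX D c i) (YY D c i))"
  unfolding tsum_def nn_def XX_def YY_def
  by (simp add: sum_list_sum_nth lessThan_atLeast0 case_prod_beta)

locale coalg =
  fixes sm :: "complex \<Rightarrow> 'c::ab_group_add \<Rightarrow> 'c" and D :: "'c \<Rightarrow> ('c \<times> 'c) list" and e :: "'c \<Rightarrow> complex"
  assumes coalg: "coalgebra sm D e"
begin

abbreviation "n \<equiv> nn D"
abbreviation "X \<equiv> XX D"
abbreviation "Y \<equiv> YY D"

lemma VS: "vector_space sm"
  using coalg unfolding coalgebra_def by auto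

sublocale V: vector_space sm by (rule VS)

lemma e_lin: "lin_form sm e"
  using coalg unfolding coalgebra_def by auto

lemma D1: "bilin_form sm B \<Longrightarrow> lin_form sm (\<lambda>c. \<Sum>i<n c. B (X c i) (Y c i))"
  using coalg unfolding coalgebra_def by (simp add: tsum_idx)

lemma D2: "trilin_form sm T \<Longrightarrow>
  (\<Sum>i<n c. \<Sum>j<n (X c i). T (X (X c i) j) (Y (X c i) j) (Y c i))
  = (\<Sum>i<n c. \<Sum>j<n (Y c i). T (X c i) (X (Y c i) j) (Y (Y c i) j))"
  using coalg unfolding coalgebra_def by (simp add: tsum_idx)

lemma D3: "(\<Sum>i<n c. sm (e (X c i)) (Y c i)) = c"
  using coalg unfolding coalgebra_def by (simp add: tsum_idx)

lemma D3': "(\<Sum>i<n c. sm (e (Y c i)) (X c i)) = c"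
  using coalg unfolding coalgebra_def by (simp add: tsum_idx)

lemma conv_idx: "conv D K L c d = (\<Sum>i<n c. \<Sum>j<n d. K (X c i) (X d j) * L (Y c i) (Y d j))"
  unfolding conv_def by (simp add: tsum_idx)

lemma lin_sumfV: "(\<And>i. i \<in> S \<Longrightarrow> lin_form sm (f i)) \<Longrightarrow> lin_form sm (\<lambda>x. \<Sum>i\<in>S. f i x)"
  by (rule lin_sumf[OF VS])

lemma lin_mult: "lin_form sm f \<Longrightarrow> lin_form sm (\<lambda>x. f x * a)"
  using lin_const_mult[of sm f a] by (simp add: mult.commute)

lemma lin_constf: "lin_form sm (\<lambda>x. 0)"
  by (rule lin_formI[OF VS]) auto

lemma conv_ses:
  assumes K: "sesquilinear sm K" and L: "sesquilinear sm L"
  shows "sesquilinear sm (conv D K L)"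
proof (rule sesI)
  fix c
  show "lin_form sm (conv D K L c)"
    unfolding conv_idx
  proof (rule lin_sumfV)
    fix i
    let ?B = "\<lambda>u v. K (X c i) u * L (Y c i) v"
    have "bilin_form sm ?B"
      by (intro bilinI lin_const_mult lin_mult ses_lin2[OF K] ses_lin2[OF L])
    from D1[OF this] show "lin_form sm (\<lambda>d. \<Sum>j<n d. K (X c i) (X d j) * L (Y c i) (Y d j))" .
  qed
next
  fix d
  have "(\<lambda>c. cnj (conv D K L c d)) = (\<lambda>c. \<Sum>i<n c. cnj (\<Sum>j<n d. K (X c i) (X d j) * L (Y c i) (Y d j)))"
    by (simp add: conv_idx)
  moreover have "lin_form sm \<dots>"
  proof -
    let ?B = "\<lambda>u v. cnj (\<Sum>j<n d. K u (X d j) * L v (Y d j))"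
    have "bilin_form sm ?B"
    proof (rule bilinI)
      fix u show "lin_form sm (?B u)"
        by (simp, rule lin_sumfV, rule lin_const_mult, rule ses_lin1[OF L])
    next
      fix v show "lin_form sm (\<lambda>u. ?B u v)"
        by (simp, rule lin_sumfV, rule lin_mult, rule ses_lin1[OF K])
    qed
    from D1[OF this] show ?thesis .
  qed
  ultimately show "lin_form sm (\<lambda>c. cnj (conv D K L c d))" by simp
qed

end


context coalg begin

lemma basis_list:
  fixes xs :: "nat \<Rightarrow> 'c" and m :: nat
  obtains p :: nat and f :: "nat \<Rightarrow> 'c" and \<phi> :: "nat \<Rightarrow> 'c \<Rightarrow> complex" where "\<And>k. lin_form sm (\<phi> k)"
    "\<And>j k. j < p \<Longrightarrow> k < p \<Longrightarrow> \<phi> j (f k) = (if j = k then 1 else 0)"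
    "\<And>i. i < m \<Longrightarrow> xs i = (\<Sum>k<p. sm (\<phi> k (xs i)) (f k))"
proof -
  interpret P: vector_space_pair sm "(*) :: complex \<Rightarrow> complex \<Rightarrow> complex"
    by (intro vector_space_pair.intro VS vs_complex)
  obtain B where B: "B \<subseteq> xs ` {..<m}" "V.independent B" "xs ` {..<m} \<subseteq> V.span B"
    by (rule V.maximal_independent_subset)
  have finB: "finite B" using B(1) finite_subset by blast
  obtain g where g: "bij_betw g {0..<card B} B" using ex_bij_betw_nat_finite[OF finB] by blast
  define p where "p = card B"
  define \<phi> where "\<phi> k = P.construct B (\<lambda>b. if b = g k then 1 else 0)" for k
  have lin: "lin_form sm (\<phi> k)" for k
    unfolding lin_form_def \<phi>_def by (rule P.linear_construct[OF B(2)])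
  have gB: "k < p \<Longrightarrow> g k \<in> B" for k using g p_def by (auto simp: bij_betw_def)
  have ginj: "j < p \<Longrightarrow> k < p \<Longrightarrow> g j = g k \<Longrightarrow> j = k" for j k
    using g p_def by (auto simp: bij_betw_def inj_on_def)
  have dual: "\<phi> j (g k) = (if j = k then 1 else 0)" if "j < p" "k < p" for j k
    unfolding \<phi>_def using P.construct_basis[OF B(2) gB[OF that(2)]] ginj[OF that] by auto
  have rep: "xs i = (\<Sum>k<p. sm (\<phi> k (xs i)) (g k))" if "i < m" for i
  proof -
    have "xs i \<in> V.span B" using B(3) that by auto
    then obtain u where u: "xs i = (\<Sum>v\<in>B. sm (u v) v)" using V.span_finite[OF finB] by auto
    have eq1: "(\<Sum>v\<in>B. sm (u v) v) = (\<Sum>k<p. sm (u (g k)) (g k))"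
      using sum.reindex_bij_betw[OF g, of "\<lambda>v. sm (u v) v"] p_def by (simp add: lessThan_atLeast0)
    have "\<phi> k' (xs i) = u (g k')" if "k' < p" for k'
    proof -
      have "\<phi> k' (xs i) = (\<Sum>k<p. u (g k) * \<phi> k' (g k))"
        unfolding u eq1 by (rule lin_comb[OF lin])
      also have "\<dots> = (\<Sum>k<p. if k = k' then u (g k) else 0)"
        using that by (intro sum.cong) (auto simp: dual)
      also have "\<dots> = u (g k')" using that by simp
      finally show ?thesis .
    qed
    then show ?thesis unfolding u eq1 by (intro sum.cong) auto
  qed
  show ?thesis by (rule that[of \<phi> p g]) (use lin dual rep in auto)
qed

end

locale cw = coalg sm D e for sm :: "complex \<Rightarrow> 'c::ab_group_add \<Rightarrow> 'c" and D e +
  fixes c :: 'c and p :: nat and f :: "nat \<Rightarrow> 'c" and \<phi> :: "nat \<Rightarrow> 'c \<Rightarrow> complex"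
  assumes \<phi>_lin: "\<And>k. lin_form sm (\<phi> k)"
    and \<phi>_dual: "\<And>j k. j < p \<Longrightarrow> k < p \<Longrightarrow> \<phi> j (f k) = (if j = k then 1 else 0)"
    and xs_rep: "\<And>i. i < nn D c \<Longrightarrow> XX D c i = (\<Sum>k<p. sm (\<phi> k (XX D c i)) (f k))"
begin

definition w :: "nat \<Rightarrow> 'c" where "w j = (\<Sum>i<n c. sm (\<phi> j (X c i)) (Y c i))"
definition z :: "nat \<Rightarrow> nat \<Rightarrow> 'c" where "z k j = (\<Sum>l<n (f k). sm (\<phi> j (X (f k) l)) (Y (f k) l))"
definition \<alpha> :: "nat \<Rightarrow> complex" where "\<alpha> j = e (f j)"

lemma Rrep:
  assumes B: "bilin_form sm B"
  shows "(\<Sum>i<n c. B (X c i) (Y c i)) = (\<Sum>k<p. B (f k) (w k))"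
proof -
  have "(\<Sum>i<n c. B (X c i) (Y c i)) = (\<Sum>i<n c. \<Sum>k<p. \<phi> k (X c i) * B (f k) (Y c i))"
  proof (intro sum.cong refl)
    fix i assume "i \<in> {..<n c}"
    then have "B (X c i) (Y c i) = B (\<Sum>k<p. sm (\<phi> k (X c i)) (f k)) (Y c i)" using xs_rep by simp
    also have "\<dots> = (\<Sum>k<p. \<phi> k (X c i) * B (f k) (Y c i))"
      by (rule lin_comb[OF bilin_lin1[OF B]])
    finally show "B (X c i) (Y c i) = (\<Sum>k<p. \<phi> k (X c i) * B (f k) (Y c i))" .
  qed
  also have "\<dots> = (\<Sum>k<p. \<Sum>i<n c. \<phi> k (X c i) * B (f k) (Y c i))" by (rule sum.swap)
  also have "\<dots> = (\<Sum>k<p. B (f k) (w k))"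
    unfolding w_def by (intro sum.cong refl) (simp add: lin_comb[OF bilin_lin2[OF B]])
  finally show ?thesis .
qed

lemma c_span: "c = (\<Sum>k<p. sm (\<alpha> k) (w k))"
proof -
  have ex: "e (X c i) = (\<Sum>k<p. \<phi> k (X c i) * e (f k))" if "i < n c" for i
    using xs_rep[OF that] lin_comb[OF e_lin, of "\<lambda>k. \<phi> k (X c i)" f "{..<p}"] by metis
  have "(\<Sum>k<p. sm (\<alpha> k) (w k)) = (\<Sum>k<p. \<Sum>i<n c. sm (e (f k) * \<phi> k (X c i)) (Y c i))"
    unfolding w_def \<alpha>_def by (simp add: V.scale_sum_right)
  also have "\<dots> = (\<Sum>i<n c. \<Sum>k<p. sm (e (f k) * \<phi> k (X c i)) (Y c i))" by (rule sum.swap)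
  also have "\<dots> = (\<Sum>i<n c. sm (e (X c i)) (Y c i))"
    by (intro sum.cong refl) (simp add: ex V.scale_sum_left[symmetric] mult.commute)
  also have "\<dots> = c" by (rule D3)
  finally show ?thesis by simp
qed

lemma ez: "k < p \<Longrightarrow> j < p \<Longrightarrow> e (z k j) = (if k = j then 1 else 0)"
proof -
  assume a: "k < p" "j < p"
  have "e (z k j) = (\<Sum>l<n (f k). \<phi> j (X (f k) l) * e (Y (f k) l))"
    unfolding z_def by (rule lin_comb[OF e_lin])
  also have "\<dots> = \<phi> j (\<Sum>l<n (f k). sm (e (Y (f k) l)) (X (f k) l))"
    by (simp add: lin_comb[OF \<phi>_lin] mult.commute)
  also have "\<dots> = \<phi> j (f k)" by (simp add: D3')
  finally show ?thesis using \<phi>_dual[OF a(2) a(1)] by auto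
qed

lemma Wrep:
  assumes B: "bilin_form sm B" and j: "j < p"
  shows "(\<Sum>i<n (w j). B (X (w j) i) (Y (w j) i)) = (\<Sum>k<p. B (z k j) (w k))"
proof -
  define \<Phi> where "\<Phi> v = (\<Sum>i<n v. B (X v i) (Y v i))" for v
  have linP: "lin_form sm \<Phi>" unfolding \<Phi>_def by (rule D1[OF B])
  define T where "T a b d = \<phi> j a * B b d" for a b d
  have T: "trilin_form sm T"
    unfolding T_def
    by (intro trilinI lin_const_mult lin_mult bilin_lin1[OF B] bilin_lin2[OF B] \<phi>_lin)
  define G where "G a b = (\<Sum>l<n a. \<phi> j (X a l) * B (Y a l) b)" for a b
  have G: "bilin_form sm G"
  proof (rule bilinI)
    fix a show "lin_form sm (G a)"
      unfolding G_def by (intro lin_sumfV lin_const_mult bilin_lin2[OF B])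
  next
    fix b
    have "bilin_form sm (\<lambda>u v. \<phi> j u * B v b)"
      by (intro bilinI lin_const_mult lin_mult bilin_lin1[OF B] \<phi>_lin)
    from D1[OF this] show "lin_form sm (\<lambda>a. G a b)" unfolding G_def .
  qed
  have "\<Phi> (w j) = (\<Sum>i<n c. \<phi> j (X c i) * \<Phi> (Y c i))"
    unfolding w_def by (rule lin_comb[OF linP])
  also have "\<dots> = (\<Sum>i<n c. \<Sum>l<n (Y c i). T (X c i) (X (Y c i) l) (Y (Y c i) l))"
    unfolding \<Phi>_def T_def by (simp add: sum_distrib_left)
  also have "\<dots> = (\<Sum>i<n c. \<Sum>l<n (X c i). T (X (X c i) l) (Y (X c i) l) (Y c i))"
    by (rule D2[OF T, symmetric])
  also have "\<dots> = (\<Sum>i<n c. G (X c i) (Y c i))"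
    unfolding G_def T_def ..
  also have "\<dots> = (\<Sum>k<p. G (f k) (w k))" by (rule Rrep[OF G])
  also have "\<dots> = (\<Sum>k<p. B (z k j) (w k))"
    unfolding G_def z_def by (intro sum.cong refl) (simp add: lin_comb[OF bilin_lin1[OF B]])
  finally show ?thesis unfolding \<Phi>_def .
qed

lemma conv_w:
  assumes K: "sesquilinear sm K" and G: "sesquilinear sm G" and j: "j < p" and j': "j' < p"
  shows "conv D K G (w j) (w j') = (\<Sum>k<p. \<Sum>k'<p. K (z k j) (z k' j') * G (w k) (w k'))"
proof -
  define H where "H a b = (\<Sum>k'<p. K a (z k' j') * G b (w k'))" for a b
  have inner: "(\<Sum>i'<n (w j'). K a (X (w j') i') * G b (Y (w j') i')) = H a b" for a b
  proof -
    have "bilin_form sm (\<lambda>u v. K a u * G b v)"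
      by (intro bilinI lin_const_mult lin_mult ses_lin2[OF K] ses_lin2[OF G])
    from Wrep[OF this j'] show ?thesis unfolding H_def .
  qed
  have Hb: "bilin_form sm (\<lambda>a b. cnj (H a b))"
  proof (rule bilinI)
    fix a show "lin_form sm (\<lambda>b. cnj (H a b))"
      unfolding H_def by (simp, intro lin_sumfV lin_const_mult ses_lin1[OF G])
  next
    fix b show "lin_form sm (\<lambda>a. cnj (H a b))"
      unfolding H_def by (simp, intro lin_sumfV lin_mult ses_lin1[OF K])
  qed
  have "conv D K G (w j) (w j') = (\<Sum>i<n (w j). H (X (w j) i) (Y (w j) i))"
    unfolding conv_idx by (simp add: inner)
  also have "\<dots> = cnj (\<Sum>i<n (w j). cnj (H (X (w j) i) (Y (w j) i)))" by simp
  also have "\<dots> = cnj (\<Sum>k<p. cnj (H (z k j) (w k)))" by (subst Wrep[OF Hb j]) simp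
  also have "\<dots> = (\<Sum>k<p. H (z k j) (w k))" by simp
  finally show ?thesis unfolding H_def .
qed

end


definition psd :: "'i set \<Rightarrow> ('i \<Rightarrow> 'i \<Rightarrow> complex) \<Rightarrow> bool" where
  "psd S A \<longleftrightarrow> (\<forall>i\<in>S. \<forall>i'\<in>S. A i i' = cnj (A i' i)) \<and>
     (\<forall>v. 0 \<le> (\<Sum>i\<in>S. \<Sum>i'\<in>S. cnj (v i) * A i i' * v i'))"

lemma cnonneg_iff: "0 \<le> (z::complex) \<longleftrightarrow> Im z = 0 \<and> 0 \<le> Re z"
  by (auto simp: less_eq_complex_def)

lemma cmod_sq_nonneg: "0 \<le> cnj (x::complex) * x"
  by (simp add: cnonneg_iff)

lemma quad_ext:
  assumes fin: "finite S" and s: "s \<notin> S"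
    and herm: "\<forall>i\<in>insert s S. \<forall>i'\<in>insert s S. A i i' = cnj (A i' i)"
  shows "(\<Sum>i\<in>insert s S. \<Sum>i'\<in>insert s S. cnj ((v(s:=\<mu>)) i) * A i i' * (v(s:=\<mu>)) i')
    = (\<Sum>i\<in>S. \<Sum>i'\<in>S. cnj (v i) * A i i' * v i')
      + cnj \<mu> * (\<Sum>i'\<in>S. A s i' * v i') + \<mu> * cnj (\<Sum>i'\<in>S. A s i' * v i')
      + cnj \<mu> * A s s * \<mu>"
proof -
  have v1: "\<And>i. i \<in> S \<Longrightarrow> (v(s:=\<mu>)) i = v i" using s by auto
  have v2: "\<And>i. i \<in> S \<Longrightarrow> (if i = s then \<mu> else v i) = v i" using s by auto
  have hs: "A i s = cnj (A s i)" if "i \<in> S" for i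
    using herm that by blast
  have cr: "(\<Sum>i\<in>S. cnj (v i) * A i s) = cnj (\<Sum>i'\<in>S. A s i' * v i')"
    by (simp add: hs mult.commute cong: sum.cong)
  have "(\<Sum>i\<in>insert s S. \<Sum>i'\<in>insert s S. cnj ((v(s:=\<mu>)) i) * A i i' * (v(s:=\<mu>)) i')
      = cnj \<mu> * A s s * \<mu> + (\<Sum>i'\<in>S. cnj \<mu> * A s i' * v i')
        + ((\<Sum>i\<in>S. cnj (v i) * A i s * \<mu>) + (\<Sum>i\<in>S. \<Sum>i'\<in>S. cnj (v i) * A i i' * v i'))"
    using fin s by (simp add: sum.insert v1 v2 sum.distrib cong: sum.cong)
  also have "(\<Sum>i'\<in>S. cnj \<mu> * A s i' * v i') = cnj \<mu> * (\<Sum>i'\<in>S. A s i' * v i')"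
    by (simp add: sum_distrib_left mult.assoc)
  also have "(\<Sum>i\<in>S. cnj (v i) * A i s * \<mu>) = \<mu> * (\<Sum>i\<in>S. cnj (v i) * A i s)"
    by (simp add: sum_distrib_left mult.commute mult.left_commute)
  finally show ?thesis unfolding cr by (simp add: algebra_simps)
qed


lemma psd_restrict:
  assumes fin: "finite S" and s: "s \<notin> S" and P: "psd (insert s S) A"
  shows "psd S A"
  unfolding psd_def
proof safe
  show "\<And>i i'. i \<in> S \<Longrightarrow> i' \<in> S \<Longrightarrow> A i i' = cnj (A i' i)" using P unfolding psd_def by blast
  fix v
  have "0 \<le> (\<Sum>i\<in>insert s S. \<Sum>i'\<in>insert s S. cnj ((v(s:=0)) i) * A i i' * (v(s:=0)) i')"
    using P unfolding psd_def by blast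
  also have "\<dots> = (\<Sum>i\<in>S. \<Sum>i'\<in>S. cnj (v i) * A i i' * v i')"
  proof -
    have herm: "\<forall>i\<in>insert s S. \<forall>i'\<in>insert s S. A i i' = cnj (A i' i)" using P unfolding psd_def by blast
    show ?thesis using quad_ext[OF fin s herm, of v 0] by simp
  qed
  finally show "0 \<le> (\<Sum>i\<in>S. \<Sum>i'\<in>S. cnj (v i) * A i i' * v i')" .
qed

lemma ite1: "cnj (if b then 1 else 0) * x = (if b then x else (0::complex))" by simp
lemma ite2: "x * (if b then 1 else 0) = (if b then x else (0::complex))" by simp

lemma div_pos_real: "0 \<le> (x::complex) \<Longrightarrow> 0 < r \<Longrightarrow> 0 \<le> x / complex_of_real r"
  by (simp add: cnonneg_iff)

lemma psd_Q: "psd S A \<Longrightarrow> 0 \<le> (\<Sum>i\<in>S. \<Sum>i'\<in>S. cnj (v i) * A i i' * v i')"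
  unfolding psd_def by blast

lemma psd_herm: "psd S A \<Longrightarrow> i \<in> S \<Longrightarrow> i' \<in> S \<Longrightarrow> A i i' = cnj (A i' i)"
  unfolding psd_def by blast

lemma psd_diag:
  assumes P: "psd S A" and fin: "finite S" and s: "s \<in> S"
  shows "0 \<le> A s s"
  using psd_Q[OF P, of "\<lambda>x. if x = s then 1 else 0"] fin s by (simp add: ite1 ite2 sum.delta)

lemma schur:
  assumes "finite S"
  shows "psd S A \<Longrightarrow> psd S B \<Longrightarrow> 0 \<le> (\<Sum>i\<in>S. \<Sum>i'\<in>S. A i i' * B i i')"
  using assms
proof (induction S arbitrary: A B rule: finite_induct)
  case empty
  then show ?case by simp
next
  case (insert s S)
  note fin = insert.hyps(1) and s = insert.hyps(2)
  have hA: "\<forall>i\<in>insert s S. \<forall>i'\<in>insert s S. A i i' = cnj (A i' i)" using insert.prems unfolding psd_def by blast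
  have hB: "\<forall>i\<in>insert s S. \<forall>i'\<in>insert s S. B i i' = cnj (B i' i)" using insert.prems unfolding psd_def by blast
  have BS: "psd S B" by (rule psd_restrict[OF fin s insert.prems(2)])
  have a0: "0 \<le> A s s" using psd_diag[OF insert.prems(1)] fin by auto
  then have areal: "cnj (A s s) = A s s" by (simp add: cnonneg_iff complex_eq_iff)
  have Q: "0 \<le> (\<Sum>i\<in>S. \<Sum>i'\<in>S. cnj (v i) * A i i' * v i')
      + cnj \<mu> * (\<Sum>i'\<in>S. A s i' * v i') + \<mu> * cnj (\<Sum>i'\<in>S. A s i' * v i') + cnj \<mu> * A s s * \<mu>" for v \<mu>
    using psd_Q[OF insert.prems(1), of "v(s:=\<mu>)"] quad_ext[OF fin s hA, of v \<mu>] by simp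
  show ?case
  proof (cases "A s s = 0")
    case True
    have r0: "(\<Sum>i'\<in>S. A s i' * v i') = 0" for v
    proof (rule ccontr)
      assume nz: "(\<Sum>i'\<in>S. A s i' * v i') \<noteq> 0"
      define r where "r = (\<Sum>i'\<in>S. A s i' * v i')"
      define q where "q = (\<Sum>i\<in>S. \<Sum>i'\<in>S. cnj (v i) * A i i' * v i')"
      define t where "t = (Re q + 1) / (2 * (cmod r)^2)"
      have rpos: "0 < (cmod r)^2" using nz r_def by simp
      have "0 \<le> q + cnj (- of_real t * r) * r + (- of_real t * r) * cnj r"
        using Q[of v "- of_real t * r"] True unfolding r_def q_def by simp
      also have "\<dots> = q - of_real (2 * t) * (cnj r * r)"
        by (simp add: algebra_simps)
      also have "cnj r * r = of_real ((cmod r)^2)" by (metis complex_norm_square mult.commute)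
      also have "q - of_real (2 * t) * of_real ((cmod r)^2) = q - of_real (2 * t * (cmod r)^2)" by simp
      also have "2 * t * (cmod r)^2 = Re q + 1" unfolding t_def using rpos by simp
      finally have "0 \<le> Re q - (Re q + 1)" by (simp add: cnonneg_iff)
      then show False by simp
    qed
    have As: "A s i' = 0" if "i' \<in> S" for i'
      using r0[of "\<lambda>x. if x = i' then 1 else 0"] fin that by (simp add: ite2 sum.delta)
    have As': "A i s = 0" if "i \<in> S" for i
      using As[OF that] hA that by (metis complex_cnj_zero_iff insertCI)
    have AS: "psd S A" by (rule psd_restrict[OF fin s insert.prems(1)])
    have "(\<Sum>i\<in>insert s S. \<Sum>i'\<in>insert s S. A i i' * B i i') = (\<Sum>i\<in>S. \<Sum>i'\<in>S. A i i' * B i i')"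
      using fin s True As As' by (simp add: sum.insert)
    then show ?thesis using insert.IH[OF AS BS] by simp
  next
    case False
    define a where "a = A s s"
    have apos: "0 < Re a" using a0 False unfolding a_def by (auto simp: cnonneg_iff complex_eq_iff)
    have aR: "a = of_real (Re a)" using areal unfolding a_def by (simp add: complex_eq_iff)
    define A' where "A' i i' = A i i' - cnj (A s i) * A s i' / a" for i i'
    have A'psd: "psd S A'"
      unfolding psd_def
    proof safe
      fix i i' assume "i \<in> S" "i' \<in> S"
      then have h: "A i i' = cnj (A i' i)" using hA by blast
      show "A' i i' = cnj (A' i' i)"
        unfolding A'_def using h areal unfolding a_def by (simp add: mult.commute)
    next
      fix v
      define r where "r = (\<Sum>i'\<in>S. A s i' * v i')"
      define q where "q = (\<Sum>i\<in>S. \<Sum>i'\<in>S. cnj (v i) * A i i' * v i')"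
      have "(\<Sum>i\<in>S. \<Sum>i'\<in>S. cnj (v i) * A' i i' * v i')
          = q - (\<Sum>i\<in>S. \<Sum>i'\<in>S. cnj (A s i * v i) * (A s i' * v i') / a)"
        unfolding A'_def q_def by (simp add: algebra_simps sum_subtractf)
      also have "(\<Sum>i\<in>S. \<Sum>i'\<in>S. cnj (A s i * v i) * (A s i' * v i') / a) = cnj r * r / a"
        unfolding r_def cnj_sum by (simp add: sum_product sum_divide_distrib)
      also have "q - cnj r * r / a = q + cnj (- r / a) * r + (- r / a) * cnj r + cnj (- r / a) * A s s * (- r / a)"
        using areal False unfolding a_def by (simp add: field_simps)
      also have "0 \<le> \<dots>" using Q[of v "- r / a"] unfolding r_def q_def .
      finally show "0 \<le> (\<Sum>i\<in>S. \<Sum>i'\<in>S. cnj (v i) * A' i i' * v i')"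
        by simp
    qed
    have A's: "A' s i' = 0" for i'
      unfolding A'_def using areal False unfolding a_def by simp
    have A's': "A' i s = 0" if "i \<in> insert s S" for i
    proof -
      have "A i s = cnj (A s i)" using hA that by blast
      then show ?thesis unfolding A'_def using False unfolding a_def by simp
    qed
    have split: "A i i' * B i i' = cnj (A s i) * B i i' * A s i' / a + A' i i' * B i i'" for i i'
      unfolding A'_def using False unfolding a_def by (simp add: field_simps)
    have "(\<Sum>i\<in>insert s S. \<Sum>i'\<in>insert s S. A i i' * B i i')
        = (\<Sum>i\<in>insert s S. \<Sum>i'\<in>insert s S. cnj (A s i) * B i i' * A s i') / a
          + (\<Sum>i\<in>insert s S. \<Sum>i'\<in>insert s S. A' i i' * B i i')"
      by (simp add: split sum.distrib sum_divide_distrib)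
    also have "(\<Sum>i\<in>insert s S. \<Sum>i'\<in>insert s S. A' i i' * B i i') = (\<Sum>i\<in>S. \<Sum>i'\<in>S. A' i i' * B i i')"
      using fin s A's A's' by (simp add: sum.insert)
    finally have eq: "(\<Sum>i\<in>insert s S. \<Sum>i'\<in>insert s S. A i i' * B i i')
        = (\<Sum>i\<in>insert s S. \<Sum>i'\<in>insert s S. cnj (A s i) * B i i' * A s i') / a
          + (\<Sum>i\<in>S. \<Sum>i'\<in>S. A' i i' * B i i')" .
    have t1: "0 \<le> (\<Sum>i\<in>insert s S. \<Sum>i'\<in>insert s S. cnj (A s i) * B i i' * A s i')"
      by (rule psd_Q[OF insert.prems(2)])
    have t1': "0 \<le> (\<Sum>i\<in>insert s S. \<Sum>i'\<in>insert s S. cnj (A s i) * B i i' * A s i') / a"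
      using div_pos_real[OF t1 apos] aR by metis
    show ?thesis unfolding eq using t1' insert.IH[OF A'psd BS] by simp
  qed
qed


context coalg begin

lemma polarization:
  assumes K: "sesquilinear sm K" and R: "\<And>c. Im (K c c) = 0"
  shows "hermitian_form K"
  unfolding hermitian_form_def
proof (intro allI)
  fix c d
  have e1: "K (c + d) (c + d) = K c c + K c d + K d c + K d d"
    by (simp add: ses_add1[OF K] ses_add2[OF K])
  have e2: "K (c + sm \<i> d) (c + sm \<i> d) = K c c + \<i> * K c d - \<i> * K d c + K d d"
    by (simp add: ses_add1[OF K] ses_add2[OF K] ses_scale1[OF K] ses_scale2[OF K] algebra_simps)
  have "Im (K c d + K d c) = 0" using R[of "c + d"] R[of c] R[of d] e1 by simp
  moreover have "Re (K c d - K d c) = 0" using R[of "c + sm \<i> d"] R[of c] R[of d] e2 by simp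
  ultimately show "K c d = cnj (K d c)" by (simp add: complex_eq_iff)
qed

lemma pos_herm: "sesquilinear sm K \<Longrightarrow> positive_form K \<Longrightarrow> hermitian_form K"
  by (rule polarization) (auto simp: positive_form_def cnonneg_iff)

lemma quad_comb:
  assumes K: "sesquilinear sm K"
  shows "K (\<Sum>i\<in>S. sm (v i) (x i)) (\<Sum>i\<in>S. sm (v i) (x i)) = (\<Sum>i\<in>S. \<Sum>i'\<in>S. cnj (v i) * K (x i) (x i') * v i')"
proof -
  have "K (\<Sum>i\<in>S. sm (v i) (x i)) (\<Sum>i\<in>S. sm (v i) (x i)) = (\<Sum>i\<in>S. cnj (v i) * K (x i) (\<Sum>i\<in>S. sm (v i) (x i)))"
    by (rule ses_comb1[OF K])
  also have "\<dots> = (\<Sum>i\<in>S. cnj (v i) * (\<Sum>i'\<in>S. v i' * K (x i) (x i')))"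
    by (simp add: ses_comb2[OF K])
  finally show ?thesis by (simp add: sum_distrib_left algebra_simps)
qed

lemma form_psd:
  assumes K: "sesquilinear sm K" and P: "positive_form K" and fin: "finite S"
  shows "psd S (\<lambda>i i'. K (x i) (x i'))"
  unfolding psd_def
proof safe
  fix i i' show "K (x i) (x i') = cnj (K (x i') (x i))"
    using pos_herm[OF K P] unfolding hermitian_form_def by blast
next
  fix v
  show "0 \<le> (\<Sum>i\<in>S. \<Sum>i'\<in>S. cnj (v i) * K (x i) (x i') * v i')"
    using P unfolding positive_form_def quad_comb[OF K, symmetric] by blast
qed

lemma conv_pos:
  assumes K: "sesquilinear sm K" and G: "sesquilinear sm G"
    and PK: "positive_form K" and PG: "positive_form G"
  shows "positive_form (conv D K G)"
  unfolding positive_form_def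
proof
  fix c
  show "0 \<le> conv D K G c c"
    unfolding conv_idx
    by (rule schur[OF finite_lessThan form_psd[OF K PK] form_psd[OF G PG]]) auto
qed

lemma unit_ses: "sesquilinear sm (conv_unit e)"
  unfolding conv_unit_def
  by (intro sesI) (simp_all add: lin_const_mult lin_mult e_lin)

lemma unit_pos: "positive_form (conv_unit e)"
  unfolding conv_unit_def positive_form_def by (simp add: cmod_sq_nonneg)

lemma pow_ses: "sesquilinear sm K \<Longrightarrow> sesquilinear sm (conv_pow D e K k)"
  by (induction k) (auto simp: unit_ses conv_ses)

lemma pow_pos: "sesquilinear sm K \<Longrightarrow> positive_form K \<Longrightarrow> positive_form (conv_pow D e K k)"
  by (induction k) (auto simp: unit_pos conv_pos pow_ses)

lemma conv_scale1: "conv D (\<lambda>c d. s * K c d) G = (\<lambda>c d. s * conv D K G c d)"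
  by (intro ext) (simp add: conv_idx sum_distrib_left mult.assoc)

lemma conv_scale2: "conv D K (\<lambda>c d. s * G c d) = (\<lambda>c d. s * conv D K G c d)"
  by (intro ext) (simp add: conv_idx sum_distrib_left mult.assoc mult.left_commute)

lemma pow_scale: "conv_pow D e (\<lambda>c d. s * K c d) k = (\<lambda>c d. s ^ k * conv_pow D e K k c d)"
  by (induction k) (simp_all add: conv_scale1 conv_scale2 mult.assoc)

lemma ses_scale: "sesquilinear sm K \<Longrightarrow> sesquilinear sm (\<lambda>c d. s * K c d)"
  by (intro sesI) (auto intro: lin_const_mult ses_lin2 simp: ses_lin1)

end


context cw begin

definition Pi :: "('c \<Rightarrow> 'c \<Rightarrow> complex) \<Rightarrow> (nat \<Rightarrow> nat \<Rightarrow> complex) \<Rightarrow> (nat \<Rightarrow> nat \<Rightarrow> complex)" where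
  "Pi K v j j' = (if j < p \<and> j' < p then (\<Sum>k<p. \<Sum>k'<p. K (z k j) (z k' j') * v k k') else 0)"

definition Rs :: "('c \<Rightarrow> 'c \<Rightarrow> complex) \<Rightarrow> (nat \<Rightarrow> nat \<Rightarrow> complex)" where
  "Rs G j j' = (if j < p \<and> j' < p then G (w j) (w j') else 0)"

definition Nv :: "(nat \<Rightarrow> nat \<Rightarrow> complex) \<Rightarrow> real" where
  "Nv v = (\<Sum>j<p. \<Sum>j'<p. cmod (v j j'))"

definition Am :: "('c \<Rightarrow> 'c \<Rightarrow> complex) \<Rightarrow> real" where
  "Am K = (\<Sum>j<p. \<Sum>j'<p. \<Sum>k<p. \<Sum>k'<p. cmod (K (z k j) (z k' j')))"

definition supp :: "(nat \<Rightarrow> nat \<Rightarrow> complex) \<Rightarrow> bool" where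
  "supp v \<longleftrightarrow> (\<forall>j j'. \<not> (j < p \<and> j' < p) \<longrightarrow> v j j' = 0)"

lemma Pi_supp: "supp (Pi K v)" unfolding supp_def Pi_def by auto
lemma Rs_supp: "supp (Rs G)" unfolding supp_def Rs_def by auto

lemma Pi_form_add: "Pi (\<lambda>c d. K c d + G c d) v = (\<lambda>j j'. Pi K v j j' + Pi G v j j')"
  by (intro ext) (simp add: Pi_def sum.distrib distrib_right)

lemma Pi_form_scale: "Pi (\<lambda>c d. s * K c d) v = (\<lambda>j j'. s * Pi K v j j')"
  by (intro ext) (simp add: Pi_def sum_distrib_left mult.assoc)

lemma Pi_form_diff: "Pi (\<lambda>c d. K c d - G c d) v = (\<lambda>j j'. Pi K v j j' - Pi G v j j')"
  by (intro ext) (simp add: Pi_def sum_subtractf left_diff_distrib)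

lemma Pi_v_add: "Pi K (\<lambda>j j'. v j j' + u j j') = (\<lambda>j j'. Pi K v j j' + Pi K u j j')"
  by (intro ext) (simp add: Pi_def sum.distrib distrib_left)

lemma Pi_v_diff: "Pi K (\<lambda>j j'. v j j' - u j j') = (\<lambda>j j'. Pi K v j j' - Pi K u j j')"
  by (intro ext) (simp add: Pi_def sum_subtractf right_diff_distrib)

lemma Pi_v_scale: "Pi K (\<lambda>j j'. s * v j j') = (\<lambda>j j'. s * Pi K v j j')"
  by (intro ext) (simp add: Pi_def sum_distrib_left mult.left_commute)

lemma Pi_v_sum: "Pi K (\<lambda>j j'. \<Sum>i\<in>A. v i j j') = (\<lambda>j j'. \<Sum>i\<in>A. Pi K (v i) j j')"
proof (intro ext)
  fix j j'
  show "Pi K (\<lambda>j j'. \<Sum>i\<in>A. v i j j') j j' = (\<Sum>i\<in>A. Pi K (v i) j j')"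
  proof (cases "j < p \<and> j' < p")
    case True
    have "(\<Sum>k<p. \<Sum>k'<p. K (z k j) (z k' j') * (\<Sum>i\<in>A. v i k k')) = (\<Sum>k<p. \<Sum>k'<p. \<Sum>i\<in>A. K (z k j) (z k' j') * v i k k')"
      by (simp add: sum_distrib_left)
    also have "\<dots> = (\<Sum>k<p. \<Sum>i\<in>A. \<Sum>k'<p. K (z k j) (z k' j') * v i k k')"
      by (intro sum.cong refl, rule sum.swap)
    also have "\<dots> = (\<Sum>i\<in>A. \<Sum>k<p. \<Sum>k'<p. K (z k j) (z k' j') * v i k k')"
      by (rule sum.swap)
    finally show ?thesis using True unfolding Pi_def by simp
  next
    case False
    then show ?thesis unfolding Pi_def by auto
  qed
qed

lemma unit_z: "k < p \<Longrightarrow> j < p \<Longrightarrow> k' < p \<Longrightarrow> j' < p \<Longrightarrow>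
  conv_unit e (z k j) (z k' j') = (if k = j \<and> k' = j' then 1 else 0)"
  unfolding conv_unit_def by (simp add: ez)

lemma Pi_unit: "supp v \<Longrightarrow> Pi (conv_unit e) v = v"
proof (intro ext)
  fix j j' assume s: "supp v"
  show "Pi (conv_unit e) v j j' = v j j'"
  proof (cases "j < p \<and> j' < p")
    case True
    have "(\<Sum>k<p. \<Sum>k'<p. conv_unit e (z k j) (z k' j') * v k k') = (\<Sum>k<p. \<Sum>k'<p. if k = j \<and> k' = j' then v k k' else 0)"
      using True by (intro sum.cong refl) (simp add: unit_z)
    also have "\<dots> = (\<Sum>k<p. if k = j then v k j' else 0)"
    proof (intro sum.cong refl)
      fix k show "(\<Sum>k'<p. if k = j \<and> k' = j' then v k k' else 0) = (if k = j then v k j' else 0)"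
        using True by (cases "k = j") (simp_all add: sum.delta)
    qed
    also have "\<dots> = v j j'" using True by (simp add: sum.delta)
    finally show ?thesis using True unfolding Pi_def by simp
  next
    case False
    then show ?thesis using s unfolding Pi_def supp_def by auto
  qed
qed

lemma Nv_nonneg: "0 \<le> Nv v" unfolding Nv_def by (intro sum_nonneg) auto

lemma Am_nonneg: "0 \<le> Am K" unfolding Am_def by (intro sum_nonneg) auto

lemma entry_le: "j < p \<Longrightarrow> j' < p \<Longrightarrow> cmod (v j j') \<le> Nv v"
proof -
  assume a: "j < p" "j' < p"
  have "cmod (v j j') \<le> (\<Sum>j'<p. cmod (v j j'))"
    using a by (intro member_le_sum) auto
  also have "\<dots> \<le> Nv v" unfolding Nv_def
    using a by (intro member_le_sum[of j "{..<p}" "\<lambda>j. \<Sum>j'<p. cmod (v j j')"]) (auto intro: sum_nonneg)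
  finally show ?thesis .
qed

lemma Nv_add: "Nv (\<lambda>j j'. v j j' + u j j') \<le> Nv v + Nv u"
  unfolding Nv_def sum.distrib[symmetric] by (intro sum_mono norm_triangle_ineq)

lemma Nv_diff: "Nv (\<lambda>j j'. v j j' - u j j') \<le> Nv v + Nv u"
  unfolding Nv_def sum.distrib[symmetric] by (intro sum_mono norm_triangle_ineq4)

lemma Nv_scale: "Nv (\<lambda>j j'. s * v j j') = cmod s * Nv v"
  unfolding Nv_def by (simp add: norm_mult sum_distrib_left)

lemma N_Pi: "Nv (Pi K v) \<le> Am K * Nv v"
proof -
  have "Nv (Pi K v) = (\<Sum>j<p. \<Sum>j'<p. cmod (\<Sum>k<p. \<Sum>k'<p. K (z k j) (z k' j') * v k k'))"
    unfolding Nv_def Pi_def by simp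
  also have "\<dots> \<le> (\<Sum>j<p. \<Sum>j'<p. \<Sum>k<p. \<Sum>k'<p. cmod (K (z k j) (z k' j')) * Nv v)"
  proof (intro sum_mono)
    fix j j'
    have "cmod (\<Sum>k<p. \<Sum>k'<p. K (z k j) (z k' j') * v k k') \<le> (\<Sum>k<p. cmod (\<Sum>k'<p. K (z k j) (z k' j') * v k k'))"
      by (rule norm_sum)
    also have "\<dots> \<le> (\<Sum>k<p. \<Sum>k'<p. cmod (K (z k j) (z k' j') * v k k'))"
      by (intro sum_mono norm_sum)
    also have "\<dots> \<le> (\<Sum>k<p. \<Sum>k'<p. cmod (K (z k j) (z k' j')) * Nv v)"
      by (intro sum_mono) (auto simp: norm_mult intro!: mult_left_mono entry_le)
    finally show "cmod (\<Sum>k<p. \<Sum>k'<p. K (z k j) (z k' j') * v k k') \<le> (\<Sum>k<p. \<Sum>k'<p. cmod (K (z k j) (z k' j')) * Nv v)" .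
  qed
  also have "\<dots> = Am K * Nv v" unfolding Am_def by (simp add: sum_distrib_right)
  finally show ?thesis .
qed

lemma Rs_conv: "sesquilinear sm K \<Longrightarrow> sesquilinear sm G \<Longrightarrow> Rs (conv D K G) = Pi K (Rs G)"
  by (intro ext) (simp add: Rs_def Pi_def conv_w)

lemma Rs_pow: "sesquilinear sm K \<Longrightarrow> Rs (conv_pow D e K k) = (Pi K ^^ k) (Rs (conv_unit e))"
  by (induction k) (simp_all add: Rs_conv pow_ses)

lemma val_c: "sesquilinear sm G \<Longrightarrow> G c c = (\<Sum>j<p. \<Sum>j'<p. cnj (\<alpha> j) * \<alpha> j' * Rs G j j')"
proof -
  assume G: "sesquilinear sm G"
  have "G c c = G (\<Sum>k<p. sm (\<alpha> k) (w k)) (\<Sum>k<p. sm (\<alpha> k) (w k))"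
    using c_span by simp
  also have "\<dots> = (\<Sum>j<p. \<Sum>j'<p. cnj (\<alpha> j) * G (w j) (w j') * \<alpha> j')"
    by (rule quad_comb[OF G])
  also have "\<dots> = (\<Sum>j<p. \<Sum>j'<p. cnj (\<alpha> j) * \<alpha> j' * Rs G j j')"
    by (intro sum.cong refl) (simp add: Rs_def)
  finally show ?thesis .
qed

end


lemma binom_seq:
  fixes x :: complex and g :: "nat \<Rightarrow> complex"
  shows "(\<Sum>k\<le>m. of_nat (m choose k) * x^k * g k) + x * (\<Sum>k\<le>m. of_nat (m choose k) * x^k * g (Suc k))
    = (\<Sum>k\<le>Suc m. of_nat (Suc m choose k) * x^k * g k)"
proof -
  have R: "(\<Sum>k\<le>Suc m. of_nat (Suc m choose k) * x^k * g k) = g 0 + (\<Sum>k\<le>m. of_nat (m choose k) * x^(Suc k) * g (Suc k))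
     + (\<Sum>k\<le>m. of_nat (m choose Suc k) * x^(Suc k) * g (Suc k))"
    by (subst sum.atMost_Suc_shift) (simp add: sum.distrib distrib_right del: sum.atMost_Suc)
  have L1: "(\<Sum>k\<le>m. of_nat (m choose k) * x^k * g k) = g 0 + (\<Sum>k\<le>m. of_nat (m choose Suc k) * x^(Suc k) * g (Suc k))"
  proof -
    have "(\<Sum>k\<le>m. of_nat (m choose k) * x^k * g k) = g 0 + (\<Sum>k<m. of_nat (m choose Suc k) * x^(Suc k) * g (Suc k))"
      by (simp add: sum.atMost_shift)
    also have "(\<Sum>k<m. of_nat (m choose Suc k) * x^(Suc k) * g (Suc k)) = (\<Sum>k\<le>m. of_nat (m choose Suc k) * x^(Suc k) * g (Suc k))"
      by (simp add: lessThan_Suc_atMost[symmetric] del: lessThan_Suc_atMost)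
    finally show ?thesis .
  qed
  have L2: "x * (\<Sum>k\<le>m. of_nat (m choose k) * x^k * g (Suc k)) = (\<Sum>k\<le>m. of_nat (m choose k) * x^(Suc k) * g (Suc k))"
    by (simp add: sum_distrib_left algebra_simps)
  show ?thesis unfolding R L1 L2 by simp
qed

lemma binom_coef_le: "real (n choose k) * (1 / real n) ^ k \<le> 1 / fact k"
proof (cases "n = 0")
  case True then show ?thesis by (cases k) auto
next
  case False
  have "real (n choose k) * fact k \<le> real n ^ k"
    using binomial_fact_pow[of n k] by (metis of_nat_fact of_nat_le_iff of_nat_mult of_nat_power)
  then show ?thesis using False
    by (simp add: field_simps)
qed

lemma exp_sums_real: "(\<lambda>k. a^k / fact k) sums exp (a::real)"
  using exp_converges[of a] by (simp add: divide_inverse mult.commute scaleR_conv_of_real)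

lemma binom_series_bound:
  fixes g :: "nat \<Rightarrow> complex" and a B :: real and n :: nat
  assumes a: "0 \<le> a" and B: "0 \<le> B" and g: "\<And>k. cmod (g k) \<le> a^k * B" and n: "n > 0"
  shows "summable (\<lambda>k. g k / fact k)"
    and "cmod ((\<Sum>k\<le>n. of_nat (n choose k) * (1 / of_nat n)^k * g k) - (\<Sum>k. g k / fact k))
        \<le> (exp a - (1 + a / n)^n) * B"
proof -
  have se: "summable (\<lambda>k. a^k / fact k * B)"
    using exp_sums_real[of a] summable_mult2 sums_summable by blast
  have ge: "cmod (g k / fact k) \<le> a^k / fact k * B" for k
    using g[of k] by (simp add: norm_divide field_simps)
  show sg: "summable (\<lambda>k. g k / fact k)"
    by (rule summable_comparison_test[OF _ se]) (use ge in auto)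
  define c where "c k = (if k \<le> n then real (n choose k) * (1 / real n) ^ k else 0)" for k
  have c0: "0 \<le> c k" for k unfolding c_def by auto
  have c1: "c k \<le> 1 / fact k" for k unfolding c_def using binom_coef_le[of n k] by auto
  have fin: "(\<Sum>k\<le>n. of_nat (n choose k) * (1 / of_nat n)^k * g k) = (\<Sum>k. of_real (c k) * g k)"
    by (subst suminf_finite[of "{..n}"]) (auto simp: c_def)
  have sc: "summable (\<lambda>k. of_real (c k) * g k)"
    by (rule summable_finite[of "{..n}"]) (auto simp: c_def)
  define h where "h k = of_real (c k) * g k - g k / fact k" for k
  have hsum: "(\<lambda>k. h k) sums ((\<Sum>k. of_real (c k) * g k) - (\<Sum>k. g k / fact k))"
    unfolding h_def by (intro sums_diff summable_sums sc sg)
  have hb: "cmod (h k) \<le> (1 / fact k - c k) * a^k * B" for k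
  proof -
    have eq: "h k = of_real (c k - 1 / fact k) * g k" unfolding h_def by (simp add: field_simps)
    have n1: "cmod (complex_of_real (c k - 1 / fact k)) = 1 / fact k - c k"
      using c1[of k] by (simp only: norm_of_real)
    have "cmod (h k) = (1 / fact k - c k) * cmod (g k)" unfolding eq norm_mult n1 ..
    also have "\<dots> \<le> (1 / fact k - c k) * (a^k * B)" using c1[of k] g[of k] by (intro mult_left_mono) auto
    finally show ?thesis by (simp add: mult.assoc)
  qed
  have sb: "(\<lambda>k. (1 / fact k - c k) * a^k * B) sums ((exp a - (1 + a / n)^n) * B)"
  proof -
    have "(\<lambda>k. a^k / fact k * B) sums (exp a * B)" using exp_sums_real[of a] by (rule sums_mult2)
    moreover have "(\<lambda>k. c k * a^k * B) sums ((1 + a / n)^n * B)"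
    proof -
      have "(\<lambda>k. c k * a^k * B) sums (\<Sum>k\<le>n. c k * a^k * B)"
        by (rule sums_finite) (auto simp: c_def)
      moreover have "(\<Sum>k\<le>n. c k * a^k * B) = (1 + a / n)^n * B"
      proof -
        have "(1 + a / n)^n = (\<Sum>k\<le>n. real (n choose k) * (a / n)^k * 1^(n-k))"
          using binomial_ring[of "a / n" 1 n] by (simp add: add.commute)
        then show ?thesis unfolding c_def by (simp add: sum_distrib_left sum_distrib_right power_divide field_simps)
      qed
      ultimately show ?thesis by simp
    qed
    ultimately have "(\<lambda>k. a^k / fact k * B - c k * a^k * B) sums (exp a * B - (1 + a / n)^n * B)"
      by (rule sums_diff)
    then show ?thesis by (simp add: algebra_simps)
  qed
  have "cmod ((\<Sum>k. of_real (c k) * g k) - (\<Sum>k. g k / fact k)) = cmod (\<Sum>k. h k)"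
    using hsum sums_unique by metis
  also have "\<dots> \<le> (\<Sum>k. (1 / fact k - c k) * a^k * B)"
    by (rule norm_suminf_le) (use hb sb sums_summable in auto)
  also have "\<dots> = (exp a - (1 + a / n)^n) * B" using sb sums_unique by metis
  finally show "cmod ((\<Sum>k\<le>n. of_nat (n choose k) * (1 / of_nat n)^k * g k) - (\<Sum>k. g k / fact k))
        \<le> (exp a - (1 + a / n)^n) * B" unfolding fin .
qed


context cw begin

lemma supp_pow: "supp v \<Longrightarrow> supp ((Pi K ^^ m) v)"
  by (induction m) (auto simp: Pi_supp)

lemma supp_diff: "supp v \<Longrightarrow> supp u \<Longrightarrow> supp (\<lambda>j j'. v j j' - u j j')"
  unfolding supp_def by auto

lemma supp_sum: "(\<And>k. k \<in> A \<Longrightarrow> supp (v k)) \<Longrightarrow> supp (\<lambda>j j'. \<Sum>k\<in>A. s k * v k j j')"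
  unfolding supp_def by auto

lemma pow_bound: "Nv ((Pi K ^^ m) v) \<le> Am K ^ m * Nv v"
proof (induction m)
  case 0 then show ?case by simp
next
  case (Suc m)
  have "Nv ((Pi K ^^ Suc m) v) \<le> Am K * Nv ((Pi K ^^ m) v)" using N_Pi by simp
  also have "\<dots> \<le> Am K * (Am K ^ m * Nv v)" by (rule mult_left_mono[OF Suc Am_nonneg])
  finally show ?case by (simp add: mult.assoc)
qed

context
  fixes L1 Q1 :: "'c \<Rightarrow> 'c \<Rightarrow> complex"
begin

definition Xf :: "nat \<Rightarrow> 'c \<Rightarrow> 'c \<Rightarrow> complex" where
  "Xf r = (\<lambda>c d. conv_unit e c d + (1 / of_nat r) * L1 c d + (1 / of_nat r)^2 * Q1 c d)"
definition Yf :: "nat \<Rightarrow> 'c \<Rightarrow> 'c \<Rightarrow> complex" where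
  "Yf r = (\<lambda>c d. conv_unit e c d + (1 / of_nat r) * L1 c d)"
definition \<beta> :: "nat \<Rightarrow> real" where
  "\<beta> r = 1 + Am L1 / r + Am Q1 / (real r)^2"

lemma PiX: "supp v \<Longrightarrow> Pi (Xf r) v = (\<lambda>j j'. v j j' + (1 / of_nat r) * Pi L1 v j j' + (1 / of_nat r)^2 * Pi Q1 v j j')"
  unfolding Xf_def Pi_form_add Pi_form_scale by (simp add: Pi_unit)

lemma PiY: "supp v \<Longrightarrow> Pi (Yf r) v = (\<lambda>j j'. v j j' + (1 / of_nat r) * Pi L1 v j j')"
  unfolding Yf_def Pi_form_add Pi_form_scale by (simp add: Pi_unit)

lemma beta_ge1: "1 \<le> \<beta> r"
  unfolding \<beta>_def using Am_nonneg[of L1] Am_nonneg[of Q1] by simp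

lemma NX: "supp v \<Longrightarrow> Nv (Pi (Xf r) v) \<le> \<beta> r * Nv v"
proof -
  assume s: "supp v"
  have "Nv (Pi (Xf r) v) \<le> Nv (\<lambda>j j'. v j j' + (1 / of_nat r) * Pi L1 v j j') + Nv (\<lambda>j j'. (1 / of_nat r)^2 * Pi Q1 v j j')"
    unfolding PiX[OF s] by (rule Nv_add)
  also have "\<dots> \<le> Nv v + Nv (\<lambda>j j'. (1 / of_nat r) * Pi L1 v j j') + Nv (\<lambda>j j'. (1 / of_nat r)^2 * Pi Q1 v j j')"
    using Nv_add by simp
  also have "\<dots> = Nv v + (1 / r) * Nv (Pi L1 v) + (1 / r)^2 * Nv (Pi Q1 v)"
    unfolding Nv_scale by (simp add: norm_divide norm_power)
  also have "\<dots> \<le> Nv v + (1 / r) * (Am L1 * Nv v) + (1 / r)^2 * (Am Q1 * Nv v)"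
    by (intro add_mono mult_left_mono N_Pi order_refl) auto
  also have "\<dots> = \<beta> r * Nv v" unfolding \<beta>_def by (simp add: field_simps power2_eq_square)
  finally show ?thesis .
qed

lemma NY: "supp v \<Longrightarrow> Nv (Pi (Yf r) v) \<le> \<beta> r * Nv v"
proof -
  assume s: "supp v"
  have "Nv (Pi (Yf r) v) \<le> Nv v + Nv (\<lambda>j j'. (1 / of_nat r) * Pi L1 v j j')"
    unfolding PiY[OF s] by (rule Nv_add)
  also have "\<dots> = Nv v + (1 / r) * Nv (Pi L1 v)"
    unfolding Nv_scale by (simp add: norm_divide)
  also have "\<dots> \<le> Nv v + (1 / r) * (Am L1 * Nv v)"
    by (intro add_mono mult_left_mono N_Pi order_refl) auto
  also have "\<dots> \<le> \<beta> r * Nv v" unfolding \<beta>_def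
    using Am_nonneg[of Q1] Nv_nonneg[of v] by (simp add: field_simps)
  finally show ?thesis .
qed

lemma NYm: "supp v \<Longrightarrow> Nv ((Pi (Yf r) ^^ m) v) \<le> \<beta> r ^ m * Nv v"
proof (induction m)
  case 0 then show ?case by simp
next
  case (Suc m)
  have "Nv ((Pi (Yf r) ^^ Suc m) v) \<le> \<beta> r * Nv ((Pi (Yf r) ^^ m) v)"
    using NY[OF supp_pow[OF Suc.prems]] by simp
  also have "\<dots> \<le> \<beta> r * (\<beta> r ^ m * Nv v)"
    using Suc beta_ge1[of r] by (intro mult_left_mono) auto
  finally show ?case by (simp add: mult.assoc)
qed

lemma XYdiff:
  assumes s: "supp v0"
  shows "Nv (\<lambda>j j'. (Pi (Xf r) ^^ m) v0 j j' - (Pi (Yf r) ^^ m) v0 j j')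
     \<le> m * ((1 / r)^2 * Am Q1) * \<beta> r ^ m * Nv v0"
proof (induction m)
  case 0 then show ?case by (simp add: Nv_def)
next
  case (Suc m)
  define V where "V = (Pi (Xf r) ^^ m) v0"
  define W where "W = (Pi (Yf r) ^^ m) v0"
  have sV: "supp V" unfolding V_def by (rule supp_pow[OF s])
  have sW: "supp W" unfolding W_def by (rule supp_pow[OF s])
  have sD: "supp (\<lambda>j j'. V j j' - W j j')" by (rule supp_diff[OF sV sW])
  define s2 where "s2 = (1 / real r)^2"
  have s2: "0 \<le> s2" unfolding s2_def by simp
  have eq: "(\<lambda>j j'. Pi (Xf r) V j j' - Pi (Yf r) W j j')
     = (\<lambda>j j'. Pi (Xf r) (\<lambda>j j'. V j j' - W j j') j j' + (1 / of_nat r)^2 * Pi Q1 W j j')"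
    unfolding Pi_v_diff PiX[OF sV] PiX[OF sW] PiY[OF sW] by (intro ext) (simp add: algebra_simps)
  have "Nv (\<lambda>j j'. (Pi (Xf r) ^^ Suc m) v0 j j' - (Pi (Yf r) ^^ Suc m) v0 j j')
      = Nv (\<lambda>j j'. Pi (Xf r) V j j' - Pi (Yf r) W j j')" unfolding V_def W_def by simp
  also have "\<dots> \<le> Nv (Pi (Xf r) (\<lambda>j j'. V j j' - W j j')) + Nv (\<lambda>j j'. (1 / of_nat r)^2 * Pi Q1 W j j')"
    unfolding eq by (rule Nv_add)
  also have "\<dots> \<le> \<beta> r * Nv (\<lambda>j j'. V j j' - W j j') + s2 * (Am Q1 * (\<beta> r ^ m * Nv v0))"
  proof (rule add_mono)
    show "Nv (Pi (Xf r) (\<lambda>j j'. V j j' - W j j')) \<le> \<beta> r * Nv (\<lambda>j j'. V j j' - W j j')" by (rule NX[OF sD])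
    have "Nv (\<lambda>j j'. (1 / of_nat r)^2 * Pi Q1 W j j') = s2 * Nv (Pi Q1 W)"
      unfolding s2_def Nv_scale by (simp add: norm_divide norm_power)
    also have "\<dots> \<le> s2 * (Am Q1 * Nv W)" by (intro mult_left_mono N_Pi s2)
    also have "\<dots> \<le> s2 * (Am Q1 * (\<beta> r ^ m * Nv v0))"
      unfolding W_def by (intro mult_left_mono NYm[OF s] s2 Am_nonneg)
    finally show "Nv (\<lambda>j j'. (1 / of_nat r)^2 * Pi Q1 W j j') \<le> s2 * (Am Q1 * (\<beta> r ^ m * Nv v0))" .
  qed
  also have "\<dots> \<le> \<beta> r * (m * (s2 * Am Q1) * \<beta> r ^ m * Nv v0) + s2 * (Am Q1 * (\<beta> r ^ m * Nv v0))"
    using Suc.IH beta_ge1[of r] Am_nonneg[of Q1] unfolding V_def W_def s2_def by (intro add_mono mult_left_mono) auto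
  also have "\<dots> \<le> Suc m * (s2 * Am Q1) * \<beta> r ^ Suc m * Nv v0"
  proof -
    have x: "0 \<le> s2 * Am Q1 * Nv v0" using s2 Am_nonneg[of Q1] Nv_nonneg[of v0] by simp
    have "\<beta> r ^ m \<le> \<beta> r ^ Suc m" using beta_ge1[of r] by (simp add: power_increasing)
    then have "s2 * Am Q1 * Nv v0 * \<beta> r ^ m \<le> s2 * Am Q1 * Nv v0 * \<beta> r ^ Suc m"
      by (intro mult_left_mono x)
    then show ?thesis by (simp add: algebra_simps)
  qed
  finally show ?case unfolding s2_def .
qed

lemma Ypow:
  assumes s: "supp v0"
  shows "(Pi (Yf r) ^^ m) v0 = (\<lambda>j j'. \<Sum>k\<le>m. of_nat (m choose k) * (1 / of_nat r)^k * (Pi L1 ^^ k) v0 j j')"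
proof (induction m)
  case 0 then show ?case by simp
next
  case (Suc m)
  define F where "F = (\<lambda>j j'. \<Sum>k\<le>m. of_nat (m choose k) * (1 / of_nat r)^k * (Pi L1 ^^ k) v0 j j')"
  have sF: "supp F" unfolding F_def by (intro supp_sum supp_pow[OF s])
  have MF: "Pi L1 F = (\<lambda>j j'. \<Sum>k\<le>m. of_nat (m choose k) * (1 / of_nat r)^k * (Pi L1 ^^ Suc k) v0 j j')"
    unfolding F_def Pi_v_sum Pi_v_scale by simp
  have "(Pi (Yf r) ^^ Suc m) v0 = Pi (Yf r) F" using Suc.IH unfolding F_def by simp
  also have "\<dots> = (\<lambda>j j'. F j j' + (1 / of_nat r) * Pi L1 F j j')" by (rule PiY[OF sF])
  also have "\<dots> = (\<lambda>j j'. \<Sum>k\<le>Suc m. of_nat (Suc m choose k) * (1 / of_nat r)^k * (Pi L1 ^^ k) v0 j j')"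
    unfolding MF unfolding F_def by (intro ext) (rule binom_seq[of m "1 / of_nat r" "\<lambda>k. (Pi L1 ^^ k) v0 _ _"])
  finally show ?case .
qed

lemma lim_main:
  assumes s: "supp v0" and j: "j < p" and j': "j' < p"
  shows "summable (\<lambda>k. (Pi L1 ^^ k) v0 j j' / fact k)"
    and "(\<lambda>r. (Pi (Xf r) ^^ r) v0 j j') \<longlonglongrightarrow> (\<Sum>k. (Pi L1 ^^ k) v0 j j' / fact k)"
proof -
  define a where "a = Am L1"
  define b where "b = Am Q1"
  define N0 where "N0 = Nv v0"
  define g where "g k = (Pi L1 ^^ k) v0 j j'" for k
  define E where "E = (\<Sum>k. g k / fact k)"
  have a: "0 \<le> a" unfolding a_def by (rule Am_nonneg)
  have b: "0 \<le> b" unfolding b_def by (rule Am_nonneg)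
  have N0: "0 \<le> N0" unfolding N0_def by (rule Nv_nonneg)
  have gb: "cmod (g k) \<le> a^k * N0" for k
    unfolding g_def a_def N0_def using entry_le[OF j j'] pow_bound order_trans by blast
  show "summable (\<lambda>k. (Pi L1 ^^ k) v0 j j' / fact k)"
    using binom_series_bound(1)[OF a N0 gb, of 1] unfolding g_def by simp
  have bound: "cmod ((Pi (Xf r) ^^ r) v0 j j' - E) \<le> b * exp (a + b) * N0 / r + (exp a - (1 + a / r)^r) * N0"
    if r: "r > 0" for r
  proof -
    have "cmod ((Pi (Xf r) ^^ r) v0 j j' - (Pi (Yf r) ^^ r) v0 j j') \<le>
        Nv (\<lambda>j j'. (Pi (Xf r) ^^ r) v0 j j' - (Pi (Yf r) ^^ r) v0 j j')"
      by (rule entry_le[OF j j'])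
    also have "\<dots> \<le> r * ((1 / r)^2 * b) * \<beta> r ^ r * N0" unfolding b_def N0_def by (rule XYdiff[OF s])
    also have "\<dots> \<le> r * ((1 / r)^2 * b) * exp (a + b) * N0"
    proof -
      have "\<beta> r \<le> exp (a / r + b / (real r)^2)"
        unfolding \<beta>_def a_def b_def using exp_ge_add_one_self[of "Am L1 / r + Am Q1 / (real r)^2"] by (simp add: add.assoc)
      then have "\<beta> r ^ r \<le> exp (a / r + b / (real r)^2) ^ r"
        using beta_ge1[of r] by (intro power_mono) auto
      also have "\<dots> = exp (r * (a / r + b / (real r)^2))" by (simp add: exp_of_nat_mult)
      also have "\<dots> \<le> exp (a + b)"
      proof -
        have "r * (a / r + b / (real r)^2) = a + b / r" using r by (simp add: field_simps power2_eq_square)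
        also have "\<dots> \<le> a + b"
        proof -
          have r1: "1 \<le> real r" using r by simp
          have "b * 1 \<le> b * real r" by (rule mult_left_mono[OF r1 b])
          then have "b \<le> b * real r" by simp
          then show ?thesis using r b by (simp add: divide_le_eq)
        qed
        finally show ?thesis by simp
      qed
      finally have "\<beta> r ^ r \<le> exp (a + b)" .
      then show ?thesis using b N0 by (intro mult_right_mono mult_left_mono) auto
    qed
    also have "\<dots> = b * exp (a + b) * N0 / r" using r by (simp add: field_simps power2_eq_square)
    finally have t1: "cmod ((Pi (Xf r) ^^ r) v0 j j' - (Pi (Yf r) ^^ r) v0 j j') \<le> b * exp (a + b) * N0 / r" .
    have t2: "cmod ((Pi (Yf r) ^^ r) v0 j j' - E) \<le> (exp a - (1 + a / r)^r) * N0"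
      using binom_series_bound(2)[OF a N0 gb r] unfolding Ypow[OF s] g_def E_def by simp
    have "cmod ((Pi (Xf r) ^^ r) v0 j j' - E) \<le> cmod ((Pi (Xf r) ^^ r) v0 j j' - (Pi (Yf r) ^^ r) v0 j j')
        + cmod ((Pi (Yf r) ^^ r) v0 j j' - E)" by (rule norm_diff_triangle_ineq[of _ "(Pi (Yf r) ^^ r) v0 j j'", simplified] | metis norm_diff_triangle_le order_refl)
    then show ?thesis using t1 t2 by simp
  qed
  have lim0: "(\<lambda>r. b * exp (a + b) * N0 / real r + (exp a - (1 + a / r)^r) * N0) \<longlonglongrightarrow> 0"
  proof -
    have "(\<lambda>r. b * exp (a + b) * N0 / real r) \<longlonglongrightarrow> 0" by (rule lim_const_over_n)
    moreover have "(\<lambda>r. (exp a - (1 + a / r)^r) * N0) \<longlonglongrightarrow> (exp a - exp a) * N0"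
      by (intro tendsto_intros tendsto_exp_limit_sequentially)
    ultimately show ?thesis using tendsto_add by fastforce
  qed
  have "(\<lambda>r. (Pi (Xf r) ^^ r) v0 j j' - E) \<longlonglongrightarrow> 0"
  proof (rule Lim_null_comparison[OF _ lim0])
    show "\<forall>\<^sub>F r in sequentially. norm ((Pi (Xf r) ^^ r) v0 j j' - E) \<le> b * exp (a + b) * N0 / real r + (exp a - (1 + a / r)^r) * N0"
      using eventually_gt_at_top[of 0] by eventually_elim (use bound in auto)
  qed
  then show "(\<lambda>r. (Pi (Xf r) ^^ r) v0 j j') \<longlonglongrightarrow> (\<Sum>k. (Pi L1 ^^ k) v0 j j' / fact k)"
    unfolding E_def g_def by (rule LIM_zero_cancel)
qed

end

end


lemma small_le:
  fixes x K :: real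
  assumes K: "0 \<le> K" and h: "\<And>t. 0 < t \<Longrightarrow> t \<le> 1 \<Longrightarrow> x \<le> t * K"
  shows "x \<le> 0"
proof (rule field_le_epsilon)
  fix d :: real assume d: "0 < d"
  define t where "t = min 1 (d / (K + 1))"
  have t0: "0 < t" unfolding t_def using d K by simp
  have t1: "t \<le> 1" unfolding t_def by simp
  have "t * K \<le> d / (K + 1) * K" unfolding t_def using K by (intro mult_right_mono) auto
  also have "\<dots> \<le> d" using d K by (simp add: field_simps)
  finally show "x \<le> 0 + d" using h[OF t0 t1] by simp
qed

lemma deriv0:
  fixes a :: "nat \<Rightarrow> complex" and C A :: real
  assumes C: "0 \<le> C" and A: "0 \<le> A" and ab: "\<And>k. cmod (a k) \<le> C * A^k"
    and pos: "\<And>t::real. 0 \<le> t \<Longrightarrow> 0 \<le> (\<Sum>k. of_real t^k * a k / fact k)"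
  shows "Im (a 1) = 0" and "a 0 = 0 \<Longrightarrow> 0 \<le> Re (a 1)"
proof -
  define K where "K = C * A^2 * exp A"
  have K: "0 \<le> K" unfolding K_def using C A by simp
  have summ: "summable (\<lambda>k. of_real t^k * a k / fact k)" if "0 \<le> t" for t :: real
  proof (rule summable_comparison_test[OF _ summable_mult[OF sums_summable[OF exp_sums_real[of "t * A"]], of C]])
    show "\<exists>N. \<forall>k\<ge>N. norm (of_real t^k * a k / fact k) \<le> C * ((t * A)^k / fact k)"
    proof (intro exI allI impI)
      fix k :: nat
      have "norm (of_real t^k * a k / fact k) = t^k * cmod (a k) / fact k"
        using that by (simp add: norm_mult norm_divide norm_power)
      also have "\<dots> \<le> t^k * (C * A^k) / fact k"
        using that ab[of k] by (intro divide_right_mono mult_left_mono) auto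
      also have "\<dots> = C * ((t * A)^k / fact k)" by (simp add: power_mult_distrib)
      finally show "norm (of_real t^k * a k / fact k) \<le> C * ((t * A)^k / fact k)" .
    qed
  qed
  have rem: "cmod ((\<Sum>k. of_real t^k * a k / fact k) - a 0 - of_real t * a 1) \<le> t^2 * K"
    if t0: "0 < t" and t1: "t \<le> 1" for t :: real
  proof -
    define b where "b k = of_real t^k * a k / fact k" for k
    have sb: "summable b" unfolding b_def using summ t0 by simp
    have split: "(\<Sum>k. b k) = (\<Sum>k. b (k + 2)) + (\<Sum>k<2. b k)"
      by (rule suminf_split_initial_segment[OF sb])
    have "(\<Sum>k<2. b k) = a 0 + of_real t * a 1" unfolding b_def by (simp add: eval_nat_numeral)
    then have eq: "(\<Sum>k. of_real t^k * a k / fact k) - a 0 - of_real t * a 1 = (\<Sum>k. b (k + 2))"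
      using split unfolding b_def by simp
    have bb: "norm (b (k + 2)) \<le> t^2 * C * A^2 * (A^k / fact k)" for k
    proof -
      have "norm (b (k + 2)) = t^(k+2) * cmod (a (k + 2)) / fact (k + 2)"
        unfolding b_def norm_divide norm_mult norm_power norm_fact norm_of_real using t0 by simp
      also have "\<dots> \<le> t^(k+2) * (C * A^(k+2)) / fact (k + 2)"
        using t0 ab[of "k+2"] by (intro divide_right_mono mult_left_mono) auto
      also have "\<dots> \<le> t^2 * (C * A^(k+2)) / fact k"
      proof -
        have "t^(k+2) \<le> t^2" using t0 t1 by (intro power_decreasing) auto
        moreover have "(fact k :: real) \<le> fact (k + 2)" by (rule fact_mono) simp
        ultimately show ?thesis using C A t0
          by (intro frac_le mult_right_mono) (auto simp: fact_gt_zero)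
      qed
      also have "\<dots> = t^2 * C * A^2 * (A^k / fact k)" by (simp add: power_add power2_eq_square)
      finally show ?thesis .
    qed
    have "cmod (\<Sum>k. b (k + 2)) \<le> (\<Sum>k. t^2 * C * A^2 * (A^k / fact k))"
      by (rule norm_suminf_le[OF bb]) (intro summable_mult sums_summable[OF exp_sums_real])
    also have "\<dots> = t^2 * C * A^2 * exp A"
      using sums_unique[OF sums_mult[OF exp_sums_real[of A], of "t^2 * C * A^2"]] by simp
    finally show ?thesis unfolding eq K_def by (simp add: mult.assoc)
  qed
  have f0: "(\<Sum>k. of_real (0::real)^k * a k / fact k) = a 0"
    by (subst suminf_finite[of "{0}"]) auto
  have a0: "0 \<le> a 0" using pos[of 0] f0 by simp
  then have ia0: "Im (a 0) = 0" by (simp add: cnonneg_iff)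
  show "Im (a 1) = 0"
  proof -
    have "\<bar>Im (a 1)\<bar> \<le> 0"
    proof (rule small_le[OF K])
      fix t :: real assume t0: "0 < t" and t1: "t \<le> 1"
      define R where "R = (\<Sum>k. of_real t^k * a k / fact k) - a 0 - of_real t * a 1"
      have imf: "Im (\<Sum>k. of_real t^k * a k / fact k) = 0" using pos[of t] t0 by (simp add: cnonneg_iff)
      have "Im R = - t * Im (a 1)" unfolding R_def using imf ia0 by simp
      then have "t * \<bar>Im (a 1)\<bar> \<le> cmod R" using t0 abs_Im_le_cmod[of R] by (simp add: abs_mult)
      also have "\<dots> \<le> t^2 * K" unfolding R_def by (rule rem[OF t0 t1])
      finally have "t * \<bar>Im (a 1)\<bar> \<le> t * (t * K)" by (simp add: power2_eq_square mult.assoc)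
      then show "\<bar>Im (a 1)\<bar> \<le> t * K" using t0 by simp
    qed
    then show ?thesis by simp
  qed
  assume z: "a 0 = 0"
  have "- Re (a 1) \<le> 0"
  proof (rule small_le[OF K])
    fix t :: real assume t0: "0 < t" and t1: "t \<le> 1"
    define R where "R = (\<Sum>k. of_real t^k * a k / fact k) - a 0 - of_real t * a 1"
    have ref: "0 \<le> Re (\<Sum>k. of_real t^k * a k / fact k)" using pos[of t] t0 by (simp add: cnonneg_iff)
    have "Re R = Re (\<Sum>k. of_real t^k * a k / fact k) - t * Re (a 1)" unfolding R_def using z by simp
    then have "- t * Re (a 1) \<le> cmod R" using ref abs_Re_le_cmod[of R] by linarith
    also have "\<dots> \<le> t^2 * K" unfolding R_def by (rule rem[OF t0 t1])
    finally have "t * (- Re (a 1)) \<le> t * (t * K)" by (simp add: power2_eq_square mult.assoc)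
    then show "- Re (a 1) \<le> t * K" using t0 by (simp only: mult_le_cancel_left_pos)
  qed
  then show "0 \<le> Re (a 1)" by simp
qed


lemma lim_nonneg:
  fixes F :: "nat \<Rightarrow> complex"
  assumes lim: "F \<longlonglongrightarrow> l" and pos: "\<And>r. 0 \<le> F r"
  shows "0 \<le> l"
proof -
  have "(\<lambda>r. Re (F r)) \<longlonglongrightarrow> Re l" by (rule tendsto_Re[OF lim])
  then have re: "0 \<le> Re l" by (rule LIMSEQ_le_const) (use pos in \<open>auto simp: cnonneg_iff\<close>)
  have "(\<lambda>r. Im (F r)) \<longlonglongrightarrow> Im l" by (rule tendsto_Im[OF lim])
  moreover have "(\<lambda>r. Im (F r)) = (\<lambda>r. 0)" using pos by (auto simp: cnonneg_iff)
  ultimately have "Im l = 0" using LIMSEQ_unique tendsto_const by metis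
  then show ?thesis using re by (simp add: cnonneg_iff)
qed

context coalg begin

lemma conv_unit_right:
  assumes K: "sesquilinear sm K"
  shows "conv D K (conv_unit e) = K"
proof (intro ext)
  fix c d
  have "K c d = K (\<Sum>i<n c. sm (e (Y c i)) (X c i)) (\<Sum>j<n d. sm (e (Y d j)) (X d j))"
    by (simp add: D3')
  also have "\<dots> = (\<Sum>i<n c. cnj (e (Y c i)) * K (X c i) (\<Sum>j<n d. sm (e (Y d j)) (X d j)))"
    by (rule ses_comb1[OF K])
  also have "\<dots> = (\<Sum>i<n c. cnj (e (Y c i)) * (\<Sum>j<n d. e (Y d j) * K (X c i) (X d j)))"
    by (simp add: ses_comb2[OF K])
  also have "\<dots> = conv D K (conv_unit e) c d"
    unfolding conv_idx conv_unit_def by (simp add: sum_distrib_left algebra_simps)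
  finally show "conv D K (conv_unit e) c d = K c d" by simp
qed

lemma ses_zero1: "sesquilinear sm K \<Longrightarrow> K 0 d = 0"
  using lin_zero[OF ses_lin1[of sm K d]] by simp

lemma ses_plus: "sesquilinear sm K \<Longrightarrow> sesquilinear sm G \<Longrightarrow> sesquilinear sm (\<lambda>c d. K c d + G c d)"
proof (rule sesI)
  fix c assume K: "sesquilinear sm K" and G: "sesquilinear sm G"
  show "lin_form sm (\<lambda>d. K c d + G c d)" by (rule lin_plus[OF ses_lin2[OF K] ses_lin2[OF G]])
next
  fix d assume K: "sesquilinear sm K" and G: "sesquilinear sm G"
  show "lin_form sm (\<lambda>c. cnj (K c d + G c d))"
    unfolding complex_cnj_add by (rule lin_plus[OF ses_lin1[OF K] ses_lin1[OF G]])
qed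

lemma get_cw:
  obtains p :: nat and f :: "nat \<Rightarrow> 'c" and \<phi> :: "nat \<Rightarrow> 'c \<Rightarrow> complex" where "cw sm D e c p f \<phi>"
proof -
  obtain p :: nat and f :: "nat \<Rightarrow> 'c" and \<phi> :: "nat \<Rightarrow> 'c \<Rightarrow> complex" where a: "\<And>k. lin_form sm (\<phi> k)"
    "\<And>j k. j < p \<Longrightarrow> k < p \<Longrightarrow> \<phi> j (f k) = (if j = k then 1 else 0)"
    "\<And>i. i < n c \<Longrightarrow> X c i = (\<Sum>k<p. sm (\<phi> k (X c i)) (f k))"
    by (rule basis_list[where xs = "X c" and m = "n c"]) blast
  have "cw sm D e c p f \<phi>"
    by (intro cw.intro coalg_axioms cw_axioms.intro) (use a in auto)
  then show ?thesis by (rule that)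
qed

lemma dir2:
  assumes L: "sesquilinear sm L"
    and H: "\<forall>t::real. t \<ge> 0 \<longrightarrow> positive_form (exp_star D e (\<lambda>c d. complex_of_real t * L c d))"
  shows "cond_positive e L \<and> hermitian_form L"
proof -
  have key: "Im (L c c) = 0 \<and> (e c = 0 \<longrightarrow> 0 \<le> Re (L c c))" for c
  proof -
    obtain p :: nat and f :: "nat \<Rightarrow> 'c" and \<phi> :: "nat \<Rightarrow> 'c \<Rightarrow> complex" where "cw sm D e c p f \<phi>" by (rule get_cw)
    interpret W: cw sm D e c p f \<phi> by fact
    define u0 where "u0 = W.Rs (conv_unit e)"
    define a where "a k = conv_pow D e L k c c" for k
    define C where "C = (\<Sum>j<p. \<Sum>j'<p. cmod (W.\<alpha> j) * cmod (W.\<alpha> j') * W.Nv u0)"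
    have C: "0 \<le> C" unfolding C_def using W.Nv_nonneg by (intro sum_nonneg) auto
    have aeq: "a k = (\<Sum>j<p. \<Sum>j'<p. cnj (W.\<alpha> j) * W.\<alpha> j' * (W.Pi L ^^ k) u0 j j')" for k
      unfolding a_def u0_def W.val_c[OF pow_ses[OF L]] W.Rs_pow[OF L] ..
    have ab: "cmod (a k) \<le> C * W.Am L ^ k" for k
    proof -
      have "cmod (a k) \<le> (\<Sum>j<p. \<Sum>j'<p. cmod (cnj (W.\<alpha> j) * W.\<alpha> j' * (W.Pi L ^^ k) u0 j j'))"
        unfolding aeq by (rule order_trans[OF norm_sum sum_mono[OF norm_sum]])
      also have "\<dots> \<le> (\<Sum>j<p. \<Sum>j'<p. cmod (W.\<alpha> j) * cmod (W.\<alpha> j') * (W.Am L ^ k * W.Nv u0))"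
      proof (intro sum_mono)
        fix j j' assume "j \<in> {..<p}" "j' \<in> {..<p}"
        then have "cmod ((W.Pi L ^^ k) u0 j j') \<le> W.Am L ^ k * W.Nv u0"
          using W.entry_le[of j j' "(W.Pi L ^^ k) u0"] W.pow_bound[where K = L and m = k and v = u0] by simp
        then show "cmod (cnj (W.\<alpha> j) * W.\<alpha> j' * (W.Pi L ^^ k) u0 j j') \<le> cmod (W.\<alpha> j) * cmod (W.\<alpha> j') * (W.Am L ^ k * W.Nv u0)"
          by (simp add: norm_mult mult_left_mono)
      qed
      also have "\<dots> = C * W.Am L ^ k" unfolding C_def sum_distrib_right by (simp add: mult.commute mult.left_commute)
      finally show ?thesis .
    qed
    have pos: "0 \<le> (\<Sum>k. of_real t^k * a k / fact k)" if "0 \<le> t" for t :: real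
    proof -
      have "0 \<le> exp_star D e (\<lambda>c d. complex_of_real t * L c d) c c"
        using H that unfolding positive_form_def by blast
      also have "exp_star D e (\<lambda>c d. complex_of_real t * L c d) c c = (\<Sum>k. of_real t^k * a k / fact k)"
        unfolding exp_star_def pow_scale a_def of_nat_fact ..
      finally show ?thesis .
    qed
    have d: "Im (a 1) = 0" "a 0 = 0 \<Longrightarrow> 0 \<le> Re (a 1)"
      by (rule deriv0[OF C W.Am_nonneg ab pos], assumption)+
    have a1: "a 1 = L c c" unfolding a_def by (simp add: conv_unit_right[OF L])
    have a0: "a 0 = cnj (e c) * e c" unfolding a_def by (simp add: conv_unit_def)
    show ?thesis using d a1 a0 by auto
  qed
  have "hermitian_form L" by (rule polarization[OF L]) (use key in auto)
  moreover have "cond_positive e L" unfolding cond_positive_def using key by (auto simp: cnonneg_iff)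
  ultimately show ?thesis by simp
qed

end


context coalg begin

lemma Zpos:
  assumes L: "sesquilinear sm L" and Hm: "hermitian_form L" and CP: "cond_positive e L"
    and c0: "e c0 = 1" and s: "0 \<le> s"
  shows "0 \<le> conv_unit e x x + of_real s * L x x
     + (of_real s)^2 * (cnj (L c0 x + (of_real (Re (L c0 c0)) / 2 - L c0 c0) * e x)
        * (L c0 x + (of_real (Re (L c0 c0)) / 2 - L c0 c0) * e x))"
proof -
  define w where "w = e x"
  define A where "A = x - sm w c0"
  define lr where "lr = Re (L c0 c0)"
  define l where "l = L c0 A"
  have eA: "e A = 0" unfolding A_def using lin_diff[OF e_lin] lin_scale[OF e_lin] c0 w_def by simp
  have LAA: "0 \<le> L A A" using CP eA unfolding cond_positive_def by blast
  have xA: "x = A + sm w c0" unfolding A_def by simp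
  have lamR: "L c0 c0 = of_real lr"
    using Hm unfolding hermitian_form_def lr_def by (metis Reals_cnj_iff complex_is_Real_iff of_real_Re)
  have hA: "L A c0 = cnj l" using Hm unfolding hermitian_form_def l_def by blast
  have Lxx: "L x x = L A A + w * cnj l + cnj w * l + cnj w * w * of_real lr"
  proof -
    have "L x x = L (A + sm w c0) (A + sm w c0)" using xA by simp
    also have "\<dots> = L A A + w * L A c0 + cnj w * (L c0 A + w * L c0 c0)"
      by (simp add: ses_add1[OF L] ses_add2[OF L] ses_scale1[OF L] ses_scale2[OF L] algebra_simps)
    also have "\<dots> = L A A + w * L A c0 + cnj w * L c0 A + cnj w * w * L c0 c0" by (simp add: algebra_simps)
    finally show ?thesis unfolding hA lamR l_def by (simp add: algebra_simps)
  qed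
  have Lc0x: "L c0 x = l + w * of_real lr"
  proof -
    have "L c0 x = L c0 (A + sm w c0)" using xA by simp
    then show ?thesis unfolding l_def using lamR by (simp add: ses_add2[OF L] ses_scale2[OF L])
  qed
  have psi: "L c0 x + (of_real (Re (L c0 c0)) / 2 - L c0 c0) * e x = l + of_real lr / 2 * w"
    unfolding Lc0x lamR w_def[symmetric] lr_def[symmetric] by (simp add: algebra_simps)
  have uxx: "conv_unit e x x = cnj w * w" unfolding conv_unit_def w_def ..
  have eq: "conv_unit e x x + of_real s * L x x + (of_real s)^2 * (cnj (l + of_real lr / 2 * w) * (l + of_real lr / 2 * w))
     = cnj (w + of_real s * (l + of_real lr / 2 * w)) * (w + of_real s * (l + of_real lr / 2 * w)) + of_real s * L A A"
    unfolding uxx Lxx by (simp add: field_simps power2_eq_square)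
  have "0 \<le> cnj (w + of_real s * (l + of_real lr / 2 * w)) * (w + of_real s * (l + of_real lr / 2 * w)) + of_real s * L A A"
    using s LAA by (intro add_nonneg_nonneg cmod_sq_nonneg mult_nonneg_nonneg) (auto simp: cnonneg_iff)
  then show ?thesis unfolding psi eq .
qed

lemma dir1:
  assumes L: "sesquilinear sm L" and Hm: "hermitian_form L" and CP: "cond_positive e L" and t: "0 \<le> t"
  shows "positive_form (exp_star D e (\<lambda>c d. complex_of_real t * L c d))"
  unfolding positive_form_def
proof
  fix c
  define L1 where "L1 = (\<lambda>c d. complex_of_real t * L c d)"
  have L1: "sesquilinear sm L1" unfolding L1_def by (rule ses_scale[OF L])
  show "0 \<le> exp_star D e L1 c c"
  proof (cases "\<forall>x. e x = 0")
    case True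
    have c0: "c = 0" using D3[of c] True by simp
    have "exp_star D e L1 c c = (\<Sum>k. 0)"
      unfolding exp_star_def c0 using ses_zero1[OF pow_ses[OF L1]] by simp
    then show ?thesis by simp
  next
    case False
    then obtain x0 where x0: "e x0 \<noteq> 0" by blast
    define c0 where "c0 = sm (inverse (e x0)) x0"
    have ec0: "e c0 = 1" unfolding c0_def using lin_scale[OF e_lin] x0 by simp
    define \<kappa> where "\<kappa> = of_real (Re (L c0 c0)) / 2 - L c0 c0"
    define \<psi> where "\<psi> d = L c0 d + \<kappa> * e d" for d
    have \<psi>: "lin_form sm \<psi>" unfolding \<psi>_def by (intro lin_plus ses_lin2[OF L] lin_const_mult e_lin)
    define Q where "Q c d = cnj (\<psi> c) * \<psi> d" for c d
    have Q: "sesquilinear sm Q"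
    proof (rule sesI)
      fix c show "lin_form sm (Q c)" unfolding Q_def by (rule lin_const_mult[OF \<psi>])
    next
      fix d show "lin_form sm (\<lambda>c. cnj (Q c d))" unfolding Q_def by (simp, rule lin_mult[OF \<psi>])
    qed
    define Z where "Z s = (\<lambda>c d. conv_unit e c d + of_real s * L c d + (of_real s)^2 * Q c d)" for s :: real
    have Zs: "sesquilinear sm (Z s)" for s
      unfolding Z_def by (intro ses_plus unit_ses ses_scale L Q)
    have Zp: "positive_form (Z s)" if "0 \<le> s" for s
      unfolding positive_form_def Z_def Q_def \<psi>_def \<kappa>_def
      using Zpos[OF L Hm CP ec0 that] by blast
    obtain p :: nat and f :: "nat \<Rightarrow> 'c" and \<phi> :: "nat \<Rightarrow> 'c \<Rightarrow> complex" where "cw sm D e c p f \<phi>" by (rule get_cw)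
    interpret W: cw sm D e c p f \<phi> by fact
    define Q1 where "Q1 = (\<lambda>c d. (complex_of_real t)^2 * Q c d)"
    define u0 where "u0 = W.Rs (conv_unit e)"
    have su0: "W.supp u0" unfolding u0_def by (rule W.Rs_supp)
    have XZ: "W.Xf L1 Q1 r = Z (t / real r)" for r
      unfolding W.Xf_def Z_def L1_def Q1_def by (intro ext) (simp add: of_real_divide power_divide)
    define F where "F r = (\<Sum>j<p. \<Sum>j'<p. cnj (W.\<alpha> j) * W.\<alpha> j' * (W.Pi (W.Xf L1 Q1 r) ^^ r) u0 j j')" for r
    have Fpos: "0 \<le> F r" for r
    proof -
      have "0 \<le> conv_pow D e (Z (t / real r)) r c c"
        using pow_pos[OF Zs Zp] t unfolding positive_form_def by simp
      also have "conv_pow D e (Z (t / real r)) r c c = F r"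
        unfolding F_def u0_def W.val_c[OF pow_ses[OF Zs]] W.Rs_pow[OF Zs] XZ ..
      finally show ?thesis .
    qed
    define E where "E j j' = (\<Sum>k. (W.Pi L1 ^^ k) u0 j j' / fact k)" for j j'
    have Flim: "F \<longlonglongrightarrow> (\<Sum>j<p. \<Sum>j'<p. cnj (W.\<alpha> j) * W.\<alpha> j' * E j j')"
      unfolding F_def E_def
      by (intro tendsto_sum tendsto_mult_left W.lim_main(2)[where ?L1.0 = L1 and ?Q1.0 = Q1, OF su0]) auto
    have "(\<lambda>k. conv_pow D e L1 k c c / of_nat (fact k)) sums (\<Sum>j<p. \<Sum>j'<p. cnj (W.\<alpha> j) * W.\<alpha> j' * E j j')"
    proof -
      have "(\<lambda>k. \<Sum>j<p. \<Sum>j'<p. cnj (W.\<alpha> j) * W.\<alpha> j' * ((W.Pi L1 ^^ k) u0 j j' / fact k))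
          sums (\<Sum>j<p. \<Sum>j'<p. cnj (W.\<alpha> j) * W.\<alpha> j' * E j j')"
        unfolding E_def
        by (intro sums_sum sums_mult summable_sums W.lim_main(1)[where ?L1.0 = L1, OF su0]) auto
      moreover have "conv_pow D e L1 k c c / of_nat (fact k)
          = (\<Sum>j<p. \<Sum>j'<p. cnj (W.\<alpha> j) * W.\<alpha> j' * ((W.Pi L1 ^^ k) u0 j j' / fact k))" for k
        unfolding W.val_c[OF pow_ses[OF L1]] W.Rs_pow[OF L1] u0_def
        by (simp add: sum_divide_distrib of_nat_fact)
      ultimately show ?thesis by simp
    qed
    then have "exp_star D e L1 c c = (\<Sum>j<p. \<Sum>j'<p. cnj (W.\<alpha> j) * W.\<alpha> j' * E j j')"
      unfolding exp_star_def by (rule sums_unique[symmetric])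
    then show ?thesis using lim_nonneg[OF Flim Fpos] by simp
  qed
qed

end

theorem theorem3:
  fixes smult_c :: "complex \<Rightarrow> 'c::ab_group_add \<Rightarrow> 'c"
    and \<Delta> :: "'c \<Rightarrow> ('c \<times> 'c) list"
    and \<delta> :: "'c \<Rightarrow> complex"
    and L :: "'c \<Rightarrow> 'c \<Rightarrow> complex"
  assumes "coalgebra smult_c \<Delta> \<delta>"
    and "sesquilinear smult_c L"
  shows "(cond_positive \<delta> L \<and> hermitian_form L) \<longleftrightarrow>
         (\<forall>t::real. t \<ge> 0 \<longrightarrow> positive_form (exp_star \<Delta> \<delta> (\<lambda>c d. complex_of_real t * L c d)))"
proof -
  interpret coalg smult_c \<Delta> \<delta> by (rule coalg.intro) fact
  show ?thesis using dir1[OF assms(2)] dir2[OF assms(2)] by blast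
qed

end
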